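(* There is a deterministic distributed dynamic data structure for robust $3$-hop neighborhood listing which handles edge insertions and deletions in $O(1)$ amortized rounds.
   Context: Highly dynamic network model: a synchronous network on a fixed set $V$ of $n$ nodes with unique identifiers starts as the empty graph; at the beginning of round $i$ the graph is $G_i=(V,E_i)$, obtained from the previous graph by an adversary inserting and/or deleting an arbitrary (unbounded) set of edges. At the start of each round every node is notified only of the insertions/deletions of edges incident to it; then each node may send a message of $O(\log n)$ bits to each of its current neighbors. A distributed dynamic data structure consists of a local part $DS_v$ at each node $v$; at the end of every round, $DS_v$ may be queried and must answer immediately, without any further communication. The amortized round complexity is at most $c$ if for every round $i$, the number of rounds up to round $i$ in which at least one node $v$ has $DS_v$ in an inconsistent state, divided by the total number of topology changes that occurred up to round $i$, is at most $c$. For an edge $e$, its insertion time $t_e$ is the latest round in which $e$ was inserted. Let $E^{v,3}_i$ be the set of edges of $G_i$ having an endpoint at distance at most $2$ from $v$. The robust $3$-hop neighborhood $R^{v,3}_i\subseteq E^{v,3}_i$ consists of: all edges of $G_i$ incident to $v$; the edges of every path $v-u-w$ in $G_i$ with $t_{\{u,w\}}\geq t_{\{v,u\}}$; and the edges of every path $v-u-w-x$ in $G_i$ with $t_{\{w,x\}}\geq t_{\{u,w\}}$ and $t_{\{w,x\}}\geq t_{\{v,u\}}$. Robust $3$-hop neighborhood listing: in round $i$, $DS_v$ must respond to a query $\{u,w\}$ with $\texttt{true}$ if $\{u,w\}\in R^{v,3}_{i-1}$, with $\texttt{false}$ if $\{u,w\}\notin E^{v,3}_{i-1}$, or with $\texttt{inconsistent}$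 if $DS_v$ is in an inconsistent state. *)

theory Defs
  imports Complex_Main
begin

text \<open>A dynamic graph (adversary) is a
  sequence G of edge sets: G i is the edge set of the graph in round i
  (i \<ge> 1); G 0 is the initial empty graph.\<close>

type_synonym dyn_graph = "nat \<Rightarrow> nat set set"

definition valid_dyn_graph :: "nat set \<Rightarrow> dyn_graph \<Rightarrow> bool" where
  "valid_dyn_graph V G \<longleftrightarrow> G 0 = {} \<and>
     (\<forall>i. \<forall>e\<in>G i. \<exists>u w. e = {u, w} \<and> u \<noteq> w \<and> u \<in> V \<and> w \<in> V)"

definition changes :: "dyn_graph \<Rightarrow> nat \<Rightarrow> nat" where
  "changes G i = (\<Sum>j\<in>{1..i}. card ((G j - G (j - 1)) \<union> (G (j - 1) - G j)))"

definition ins_time :: "dyn_graph \<Rightarrow> nat \<Rightarrow> nat set \<Rightarrow> nat" where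
  "ins_time G i e = (GREATEST j. 0 < j \<and> j \<le> i \<and> e \<in> G j \<and> e \<notin> G (j - 1))"

definition dist_le2 :: "nat set set \<Rightarrow> nat \<Rightarrow> nat \<Rightarrow> bool" where
  "dist_le2 E v x \<longleftrightarrow> x = v \<or> {v, x} \<in> E \<or> (\<exists>u. {v, u} \<in> E \<and> {u, x} \<in> E)"

definition E3 :: "dyn_graph \<Rightarrow> nat \<Rightarrow> nat \<Rightarrow> nat set set" where
  "E3 G v i = {e \<in> G i. \<exists>x\<in>e. dist_le2 (G i) v x}"

definition R3 :: "dyn_graph \<Rightarrow> nat \<Rightarrow> nat \<Rightarrow> nat set set" where
  "R3 G v i =
     {e \<in> G i. v \<in> e}
   \<union> {e. \<exists>u w. (e = {v, u} \<or> e = {u, w}) \<and> distinct [v, u, w] \<and>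
          {v, u} \<in> G i \<and> {u, w} \<in> G i \<and>
          ins_time G i {u, w} \<ge> ins_time G i {v, u}}
   \<union> {e. \<exists>u w x. (e = {v, u} \<or> e = {u, w} \<or> e = {w, x}) \<and> distinct [v, u, w, x] \<and>
          {v, u} \<in> G i \<and> {u, w} \<in> G i \<and> {w, x} \<in> G i \<and>
          ins_time G i {w, x} \<ge> ins_time G i {u, w} \<and>
          ins_time G i {w, x} \<ge> ins_time G i {v, u}}"

text \<open>A deterministic distributed algorithm with local states of type nat (w.l.o.g.:
  every reachable local state is determined by a finite local history, hence
  countably many states suffice).
  \<^item> init n v: initial state of node v, knowing n and its own identifier v;
  \<^item> notify s I D: local update after being notified of the inserted (I) and deleted
    (D) incident edges, given by the identifiers of the other endpoints;
  \<^item> send s u: message (a bit string, or no message) sent to neighbour u;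
  \<^item> receive s M: local update after receiving M u from each current neighbour u
    (M u = None if nothing was received from u);
  \<^item> consistent s: whether DS_v is in a consistent state;
  \<^item> answer s e: the answer (true/false) to query e when consistent.\<close>

record dalg =
  init :: "nat \<Rightarrow> nat \<Rightarrow> nat"
  notify :: "nat \<Rightarrow> nat set \<Rightarrow> nat set \<Rightarrow> nat"
  send :: "nat \<Rightarrow> nat \<Rightarrow> bool list option"
  receive :: "nat \<Rightarrow> (nat \<Rightarrow> bool list option) \<Rightarrow> nat"
  consistent :: "nat \<Rightarrow> bool"
  answer :: "nat \<Rightarrow> nat set \<Rightarrow> bool"

definition mid_state :: "dalg \<Rightarrow> dyn_graph \<Rightarrow> nat \<Rightarrow> (nat \<Rightarrow> nat) \<Rightarrow> nat \<Rightarrow> nat" where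
  "mid_state A G j S v =
     notify A (S v) {u. {v, u} \<in> G (Suc j) - G j} {u. {v, u} \<in> G j - G (Suc j)}"

text \<open>run A n G j v: state of node v at the end of round j (j = 0: initial state).\<close>
primrec run :: "dalg \<Rightarrow> nat \<Rightarrow> dyn_graph \<Rightarrow> nat \<Rightarrow> nat \<Rightarrow> nat" where
  "run A n G 0 = (\<lambda>v. init A n v)"
| "run A n G (Suc j) = (\<lambda>v. receive A (mid_state A G j (run A n G j) v)
      (\<lambda>u. if {u, v} \<in> G (Suc j) then send A (mid_state A G j (run A n G j) u) v else None))"

definition msg :: "dalg \<Rightarrow> nat \<Rightarrow> dyn_graph \<Rightarrow> nat \<Rightarrow> nat \<Rightarrow> nat \<Rightarrow> bool list option" where
  "msg A n G j u v = send A (mid_state A G j (run A n G j) u) v"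

definition msg_bound :: "nat \<Rightarrow> nat \<Rightarrow> nat" where
  "msg_bound B n = B * nat \<lceil>log 2 (real n + 1)\<rceil>"

text \<open>A query in round i is answered by the state at the end of
  round i with respect to G_{i-1}.\<close>
definition solves_R3_listing ::
  "dalg \<Rightarrow> nat \<Rightarrow> nat \<Rightarrow> nat \<Rightarrow> nat set \<Rightarrow> dyn_graph \<Rightarrow> bool" where
  "solves_R3_listing A c B n V G \<longleftrightarrow>
     (\<forall>j u v m. {u, v} \<in> G (Suc j) \<longrightarrow> msg A n G j u v = Some m \<longrightarrow>
                length m \<le> msg_bound B n)
   \<and> (\<forall>i \<ge> 1. \<forall>v\<in>V. consistent A (run A n G i v) \<longrightarrow>
        (\<forall>e. (e \<in> R3 G v (i - 1) \<longrightarrow> answer A (run A n G i v) e)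
           \<and> (e \<notin> E3 G v (i - 1) \<longrightarrow> \<not> answer A (run A n G i v) e)))
   \<and> (\<forall>i. card {j \<in> {1..i}. \<exists>v\<in>V. \<not> consistent A (run A n G j v)} \<le> c * changes G i)"

end

theory Submission
  imports Defs "HOL-Library.Countable"
begin



datatype item = S1 nat bool | S2 nat nat bool

definition isS1 :: "nat \<Rightarrow> item \<Rightarrow> bool" where
  "isS1 x it = (case it of S1 y _ \<Rightarrow> y = x | _ \<Rightarrow> False)"
definition isS1a :: "item \<Rightarrow> bool" where
  "isS1a it = (case it of S1 _ _ \<Rightarrow> True | _ \<Rightarrow> False)"
definition stat :: "item \<Rightarrow> bool" where
  "stat it = (case it of S1 _ b \<Rightarrow> b | S2 _ _ b \<Rightarrow> b)"

definition lastSt :: "nat \<Rightarrow> (nat \<times> item) list \<Rightarrow> (nat \<times> bool) option" where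
  "lastSt x xs = map_option (\<lambda>y. (fst y, stat (snd y))) (find (\<lambda>y. isS1 x (snd y)) (rev xs))"

definition after_last :: "nat \<Rightarrow> (nat \<times> item) list \<Rightarrow> (nat \<times> item) list" where
  "after_last w xs = rev (takeWhile (\<lambda>y. \<not> isS1 w (snd y)) (rev xs))"

definition cv :: "nat \<Rightarrow> nat \<times> item \<Rightarrow> (nat \<times> item) list" where
  "cv w y = (case snd y of S2 w' x b \<Rightarrow> if w' = w then [(fst y, S1 x b)] else [] | _ \<Rightarrow> [])"

definition s2of :: "nat \<Rightarrow> (nat \<times> item) list \<Rightarrow> (nat \<times> item) list" where
  "s2of w xs = concat (map (cv w) xs)"

lemma find_app: "find P (xs @ ys) = (case find P xs of None \<Rightarrow> find P ys | Some x \<Rightarrow> Some x)"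
  by (induction xs) auto

lemma lastSt_Nil[simp]: "lastSt x [] = None"
  by (simp add: lastSt_def)

lemma lastSt_append: "lastSt x (xs @ ys) = (case lastSt x ys of None \<Rightarrow> lastSt x xs | Some p \<Rightarrow> Some p)"
  by (auto simp: lastSt_def find_app split: option.splits)

lemma lastSt_single: "lastSt x [y] = (if isS1 x (snd y) then Some (fst y, stat (snd y)) else None)"
  by (simp add: lastSt_def)

lemma lastSt_Cons: "lastSt x (y # ys) = (case lastSt x ys of None \<Rightarrow> (if isS1 x (snd y) then Some (fst y, stat (snd y)) else None) | Some p \<Rightarrow> Some p)"
  using lastSt_append[of x "[y]" ys] by (simp add: lastSt_single split: option.splits)

lemma lastSt_noS1: "\<forall>y\<in>set ys. \<not> isS1 x (snd y) \<Longrightarrow> lastSt x ys = None"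
  by (auto simp: lastSt_def find_None_iff)

lemma lastSt_app_noS1: "\<forall>y\<in>set ys. \<not> isS1 x (snd y) \<Longrightarrow> lastSt x (xs @ ys) = lastSt x xs"
  by (simp add: lastSt_append lastSt_noS1)

lemma lastSt_map_S1: "lastSt x (map (\<lambda>y. (t, S1 y (P y))) zs) = (if x \<in> set zs then Some (t, P x) else None)"
  by (induction zs rule: rev_induct) (auto simp: lastSt_append lastSt_single isS1_def stat_def)

lemma lastSt_suffix: "lastSt x ys = Some p \<Longrightarrow> lastSt x (zs @ ys) = Some p"
  by (simp add: lastSt_append)

lemma lastSt_in: "lastSt x ys = Some (t, b) \<Longrightarrow> \<exists>y\<in>set ys. fst y = t"
  by (induction ys) (auto simp: lastSt_Cons split: option.splits if_splits)

lemma lastSt_drop_low: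
  assumes "\<forall>y\<in>set (take k xs). fst y < t0" "lastSt x xs = Some (t, b)" "t0 \<le> t"
  shows "lastSt x (drop k xs) = Some (t, b)"
proof (cases "lastSt x (drop k xs)")
  case None
  then have "lastSt x (take k xs) = Some (t, b)"
    using assms(2) lastSt_append[of x "take k xs" "drop k xs"] by simp
  then obtain y where "y \<in> set (take k xs)" "fst y = t" using lastSt_in by blast
  then show ?thesis using assms by force
next
  case (Some p)
  then show ?thesis using assms(2) lastSt_append[of x "take k xs" "drop k xs"] by simp
qed

lemma after_last_snoc: "after_last w (xs @ [y]) = (if isS1 w (snd y) then [] else after_last w xs @ [y])"
  by (simp add: after_last_def)

lemma after_last_app_noS1: "\<forall>y\<in>set ys. \<not> isS1 w (snd y) \<Longrightarrow> after_last w (xs @ ys) = after_last w xs @ ys"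
  by (induction ys rule: rev_induct) (simp_all add: after_last_snoc append_assoc[symmetric] del: append_assoc)

lemma after_last_app_S1: "\<exists>y\<in>set ys. isS1 w (snd y) \<Longrightarrow> after_last w (xs @ ys) = after_last w ys"
  by (induction ys rule: rev_induct) (auto simp: after_last_snoc append_assoc[symmetric] simp del: append_assoc)

lemma after_last_noS1: "\<forall>y\<in>set ys. \<not> isS1 w (snd y) \<Longrightarrow> after_last w ys = ys"
  using after_last_app_noS1[of ys w "[]"] by (simp add: after_last_def)

lemma after_last_set: "set (after_last w xs) \<subseteq> set xs"
  by (auto simp: after_last_def dest: set_takeWhileD)

lemma s2of_append[simp]: "s2of w (xs @ ys) = s2of w xs @ s2of w ys"
  by (simp add: s2of_def)
lemma s2of_Nil[simp]: "s2of w [] = []" by (simp add: s2of_def)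

lemma s2of_set: "y \<in> set (s2of w xs) \<Longrightarrow> \<exists>z\<in>set xs. fst z = fst y"
  by (force simp: s2of_def cv_def split: item.splits if_splits)

lemma s2of_S1items: "\<forall>y\<in>set ys. isS1a (snd y) \<Longrightarrow> s2of w ys = []"
  by (induction ys) (auto simp: s2of_def cv_def isS1a_def split: item.splits)

lemma lastSt_s2of_drop_low:
  assumes "\<forall>y\<in>set (take k xs). fst y < t0" "lastSt x (s2of w (after_last w xs)) = Some (t, b)" "t0 \<le> t"
  shows "lastSt x (s2of w (after_last w (drop k xs))) = Some (t, b)"
proof (cases "\<exists>y\<in>set (drop k xs). isS1 w (snd y)")
  case True
  then show ?thesis using assms(2) after_last_app_S1[of "drop k xs" w "take k xs"] by simp
next
  case False
  then have e1: "after_last w xs = after_last w (take k xs) @ drop k xs"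
    using after_last_app_noS1[of "drop k xs" w "take k xs"] by simp
  have e2: "after_last w (drop k xs) = drop k xs" using False after_last_noS1 by blast
  show ?thesis
  proof (cases "lastSt x (s2of w (drop k xs))")
    case None
    then have "lastSt x (s2of w (after_last w (take k xs))) = Some (t, b)"
      using assms(2) by (simp add: e1 lastSt_append)
    then obtain y where "y \<in> set (s2of w (after_last w (take k xs)))" "fst y = t" using lastSt_in by blast
    then obtain z where "z \<in> set (take k xs)" "fst z = t" using s2of_set after_last_set by blast
    then show ?thesis using assms by force
  next
    case (Some p)
    then show ?thesis using assms(2) by (simp add: e1 e2 lastSt_append)
  qed
qed

lemma lastSt_rel0:
  assumes "list_all2 (\<lambda>a b. snd a = snd b \<and> fst b \<le> fst a) xs ys"
  shows "(lastSt x ys = None \<longrightarrow> lastSt x xs = None) \<and> (\<forall>t b. lastSt x ys = Some (t, b) \<longrightarrow> (\<exists>t'\<ge>t. lastSt x xs = Some (t', b)))"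
  using assms
proof (induction xs ys rule: list_all2_induct)
  case Nil then show ?case by simp
next
  case (Cons a xs b' ys)
  then show ?case
    by (auto simp: lastSt_Cons split: option.splits if_splits)
qed

lemma lastSt_rel:
  assumes "list_all2 (\<lambda>a b. snd a = snd b \<and> fst b \<le> fst a) xs ys" "lastSt x ys = Some (t, b)"
  shows "\<exists>t'\<ge>t. lastSt x xs = Some (t', b)"
  using lastSt_rel0[OF assms(1)] assms(2) by blast

lemma map_snd_lastSt: "map snd xs = map snd ys \<Longrightarrow> map_option snd (lastSt x xs) = map_option snd (lastSt x ys)"
proof (induction xs arbitrary: ys)
  case Nil then show ?case by simp
next
  case (Cons a xs)
  then obtain b ys' where "ys = b # ys'" "snd a = snd b" "map snd xs = map snd ys'" by auto
  with Cons.IH[of ys'] show ?case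
    by (auto simp: lastSt_Cons split: option.splits)
qed

lemma map_snd_after_last: "map snd xs = map snd ys \<Longrightarrow> map snd (after_last w xs) = map snd (after_last w ys)"
proof (induction xs arbitrary: ys rule: rev_induct)
  case Nil then show ?case by simp
next
  case (snoc a xs)
  then obtain b ys' where "ys = ys' @ [b]" "snd a = snd b" "map snd xs = map snd ys'"
    by (cases ys rule: rev_cases) auto
  with snoc.IH[of ys'] show ?case by (simp add: after_last_snoc)
qed

lemma map_snd_s2of: "map snd xs = map snd ys \<Longrightarrow> map snd (s2of w xs) = map snd (s2of w ys)"
proof (induction xs arbitrary: ys)
  case Nil then show ?case by simp
next
  case (Cons a xs)
  then obtain b ys' where "ys = b # ys'" "snd a = snd b" "map snd xs = map snd ys'" by auto
  with Cons.IH[of ys'] show ?case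
    using s2of_append[of w "[a]" xs] s2of_append[of w "[b]" ys']
    by (auto simp: s2of_def cv_def split: item.splits)
qed




record ast =
  nn :: nat
  me :: nat
  rnd :: nat
  nb :: "nat set"
  gen :: "(nat \<times> item) list"
  sent :: nat
  rcv :: "nat \<Rightarrow> (nat \<times> item) list"
  chg :: bool
  allE :: bool
  cns :: bool

definition ainit :: "nat \<Rightarrow> nat \<Rightarrow> ast" where
  "ainit n v = \<lparr>nn = n, me = v, rnd = 0, nb = {}, gen = [], sent = 0, rcv = (\<lambda>_. []),
     chg = False, allE = True, cns = True\<rparr>"

definition anotify :: "ast \<Rightarrow> nat list \<Rightarrow> nat list \<Rightarrow> ast" where
  "anotify s Il Dl = s\<lparr>rnd := Suc (rnd s), nb := (nb s \<union> set Il) - set Dl,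
     gen := gen s @ map (\<lambda>x. (Suc (rnd s), S1 x (x \<in> set Il))) (Il @ Dl),
     rcv := (\<lambda>u. if u \<in> set (Il @ Dl) then [] else rcv s u), chg := (Il @ Dl \<noteq> [])\<rparr>"

type_synonym amsg = "bool \<times> bool \<times> item option"

definition eflag :: "ast \<Rightarrow> bool" where "eflag s = (length (gen s) \<le> Suc (sent s))"
definition fflag :: "ast \<Rightarrow> bool" where "fflag s = (\<not> chg s \<and> eflag s \<and> allE s)"
definition hditem :: "ast \<Rightarrow> item option" where
  "hditem s = (if sent s < length (gen s) then Some (snd (gen s ! sent s)) else None)"
definition asend :: "ast \<Rightarrow> amsg" where "asend s = (eflag s, fflag s, hditem s)"

definition relay :: "nat \<Rightarrow> nat \<Rightarrow> amsg option \<Rightarrow> (nat \<times> item) list" where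
  "relay t u m = (case m of Some (_, _, Some (S1 x b)) \<Rightarrow> [(t, S2 u x b)] | _ \<Rightarrow> [])"
definition rcvadd :: "nat \<Rightarrow> amsg option \<Rightarrow> (nat \<times> item) list" where
  "rcvadd t m = (case m of Some (_, _, Some it) \<Rightarrow> [(t, it)] | _ \<Rightarrow> [])"

definition arecv :: "ast \<Rightarrow> (nat \<Rightarrow> amsg option) \<Rightarrow> ast" where
  "arecv s M = s\<lparr>sent := min (Suc (sent s)) (length (gen s)),
     gen := gen s @ concat (map (\<lambda>u. relay (rnd s) u (M u)) (sorted_list_of_set (nb s))),
     rcv := (\<lambda>u. if u \<in> nb s then rcv s u @ rcvadd (rnd s) (M u) else rcv s u),
     allE := (\<forall>u\<in>nb s. case M u of Some (e, _, _) \<Rightarrow> e | None \<Rightarrow> False),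
     cns := (\<not> chg s \<and> (\<forall>u\<in>nb s. case M u of Some (_, f, _) \<Rightarrow> f | None \<Rightarrow> False))\<rparr>"

definition aanswer :: "ast \<Rightarrow> nat set \<Rightarrow> bool" where
  "aanswer s e = (\<exists>u\<in>nb s. e = {me s, u}
      \<or> (\<exists>w. map_option snd (lastSt w (rcv s u)) = Some True \<and> e = {u, w})
      \<or> (\<exists>w x. map_option snd (lastSt x (s2of w (after_last w (rcv s u)))) = Some True
               \<and> (e = {u, w} \<or> e = {w, x})))"

definition ids :: "item \<Rightarrow> nat set" where
  "ids it = (case it of S1 x _ \<Rightarrow> {x} | S2 w x _ \<Rightarrow> {w, x})"

locale setting =
  fixes n :: nat and V :: "nat set" and G :: dyn_graph
  assumes finV: "finite V" and valid: "valid_dyn_graph V G"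
begin

lemma G0: "G 0 = {}" using valid by (simp add: valid_dyn_graph_def)

lemma edgeV: assumes "{a, b} \<in> G i" shows "a \<in> V" "b \<in> V" "a \<noteq> b"
proof -
  obtain u w where "{a, b} = {u, w}" "u \<noteq> w" "u \<in> V" "w \<in> V"
    using valid assms unfolding valid_dyn_graph_def by blast
  then show "a \<in> V" "b \<in> V" "a \<noteq> b" by (auto simp: doubleton_eq_iff)
qed

lemma edge_form: assumes "e \<in> G i" obtains a b where "e = {a, b}" "a \<noteq> b" "a \<in> V" "b \<in> V"
  using valid assms unfolding valid_dyn_graph_def by blast

lemma fin_nbr: "finite {x. P x \<and> {v, x} \<in> G i}"
  by (rule finite_subset[OF _ finV]) (auto dest: edgeV)

lemma fin_nbr2: "finite {x. {v, x} \<in> G i}"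
  by (rule finite_subset[OF _ finV]) (auto dest: edgeV)

lemma fin_nbr3: "finite {x. {v, x} \<in> A - B \<and> A \<subseteq> G i}"
  by (rule finite_subset[OF _ finV]) (auto dest: edgeV)

lemma finG: "finite (G i)"
proof -
  have "G i \<subseteq> Pow V" by (auto elim: edge_form)
  then show ?thesis using finV finite_subset by blast
qed

lemma it_ex: "e \<in> G i \<Longrightarrow> \<exists>j. 0 < j \<and> j \<le> i \<and> e \<in> G j \<and> e \<notin> G (j - 1)"
proof (induction i)
  case 0 then show ?case by (simp add: G0)
next
  case (Suc i)
  show ?case
  proof (cases "e \<in> G i")
    case True
    then obtain j where "0 < j \<and> j \<le> i \<and> e \<in> G j \<and> e \<notin> G (j - 1)" using Suc.IH by blast
    then show ?thesis by (intro exI[of _ j]) auto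
  next
    case False
    then show ?thesis using Suc.prems by (intro exI[of _ "Suc i"]) auto
  qed
qed

lemma it_le: assumes "e \<in> G i" shows "ins_time G i e \<le> i"
proof -
  obtain j where "0 < j \<and> j \<le> i \<and> e \<in> G j \<and> e \<notin> G (j - 1)" using it_ex[OF assms] by blast
  then have "0 < ins_time G i e \<and> ins_time G i e \<le> i" unfolding ins_time_def
    using GreatestI_ex_nat[where P="\<lambda>j. 0 < j \<and> j \<le> i \<and> e \<in> G j \<and> e \<notin> G (j - 1)" and b=i] by blast
  then show ?thesis by simp
qed

lemma it_same: assumes "e \<in> G i" shows "ins_time G (Suc i) e = ins_time G i e"
proof -
  have "(\<lambda>j. 0 < j \<and> j \<le> Suc i \<and> e \<in> G j \<and> e \<notin> G (j - 1)) = (\<lambda>j. 0 < j \<and> j \<le> i \<and> e \<in> G j \<and> e \<notin> G (j - 1))"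
    using assms by (auto simp: fun_eq_iff le_Suc_eq)
  then show ?thesis unfolding ins_time_def by simp
qed

lemma it_new: assumes "e \<in> G (Suc i)" "e \<notin> G i" shows "ins_time G (Suc i) e = Suc i"
  unfolding ins_time_def using assms
  by (intro Greatest_equality) auto

end



context setting begin

definition Iset :: "nat \<Rightarrow> nat \<Rightarrow> nat set" where "Iset j v = {u. {v, u} \<in> G (Suc j) - G j}"
definition Dset :: "nat \<Rightarrow> nat \<Rightarrow> nat set" where "Dset j v = {u. {v, u} \<in> G j - G (Suc j)}"
definition chset :: "nat \<Rightarrow> nat \<Rightarrow> nat set" where "chset j v = {x. ({v, x} \<in> G (Suc j)) \<noteq> ({v, x} \<in> G j)}"
definition Il :: "nat \<Rightarrow> nat \<Rightarrow> nat list" where "Il j v = sorted_list_of_set (Iset j v)"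
definition Dl :: "nat \<Rightarrow> nat \<Rightarrow> nat list" where "Dl j v = sorted_list_of_set (Dset j v)"

primrec arun :: "nat \<Rightarrow> nat \<Rightarrow> ast" where
  "arun 0 = (\<lambda>v. ainit n v)"
| "arun (Suc j) = (\<lambda>v. arecv (anotify (arun j v) (Il j v) (Dl j v))
      (\<lambda>u. if {u, v} \<in> G (Suc j) then Some (asend (anotify (arun j u) (Il j u) (Dl j u))) else None))"

definition amid :: "nat \<Rightarrow> nat \<Rightarrow> ast" where "amid j v = anotify (arun j v) (Il j v) (Dl j v)"
definition Mj :: "nat \<Rightarrow> nat \<Rightarrow> nat \<Rightarrow> amsg option" where
  "Mj j v = (\<lambda>u. if {u, v} \<in> G (Suc j) then Some (asend (amid j u)) else None)"

lemma arun_Suc': "arun (Suc j) v = arecv (amid j v) (Mj j v)"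
  by (simp only: arun.simps amid_def Mj_def)

declare arun.simps(2)[simp del]

lemma finI: "finite (Iset j v)" unfolding Iset_def by (rule finite_subset[OF _ finV]) (auto dest: edgeV)
lemma finD: "finite (Dset j v)" unfolding Dset_def by (rule finite_subset[OF _ finV]) (auto dest: edgeV)
lemma set_Il[simp]: "set (Il j v) = Iset j v" by (simp add: Il_def finI)
lemma set_Dl[simp]: "set (Dl j v) = Dset j v" by (simp add: Dl_def finD)
lemma chset_eq: "Iset j v \<union> Dset j v = chset j v" by (auto simp: Iset_def Dset_def chset_def)
lemma finch: "finite (chset j v)" using finI finD chset_eq by (metis finite_Un)
lemma chset_V: "x \<in> chset j v \<Longrightarrow> x \<in> V \<and> v \<in> V \<and> x \<noteq> v"
  by (auto simp: chset_def dest: edgeV)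

definition inv0 :: "nat \<Rightarrow> bool" where
  "inv0 r = (\<forall>v. nn (arun r v) = n \<and> me (arun r v) = v \<and> rnd (arun r v) = r
     \<and> nb (arun r v) = {u. {v, u} \<in> G r} \<and> sent (arun r v) \<le> length (gen (arun r v))
     \<and> (\<forall>y\<in>set (gen (arun r v)). fst y \<le> r \<and> ids (snd y) \<subseteq> V))"

lemma genmid: "gen (amid j v) = gen (arun j v) @ map (\<lambda>x. (Suc (rnd (arun j v)), S1 x ({v, x} \<in> G (Suc j)))) (Il j v @ Dl j v)"
proof -
  have "map (\<lambda>x. (Suc (rnd (arun j v)), S1 x (x \<in> Iset j v))) (Il j v @ Dl j v)
      = map (\<lambda>x. (Suc (rnd (arun j v)), S1 x ({v, x} \<in> G (Suc j)))) (Il j v @ Dl j v)"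
    by (rule map_cong) (auto simp: Iset_def Dset_def)
  then show ?thesis by (simp add: amid_def anotify_def)
qed

lemma mid_simps[simp]:
  "nn (amid j v) = nn (arun j v)" "me (amid j v) = me (arun j v)" "rnd (amid j v) = Suc (rnd (arun j v))"
  "sent (amid j v) = sent (arun j v)" "allE (amid j v) = allE (arun j v)"
  "chg (amid j v) = (chset j v \<noteq> {})"
  "rcv (amid j v) u = (if u \<in> chset j v then [] else rcv (arun j v) u)"
  by (auto simp: amid_def anotify_def chset_eq[symmetric] Il_def Dl_def finI finD)

lemma nbmid: "nb (arun j v) = {u. {v, u} \<in> G j} \<Longrightarrow> nb (amid j v) = {u. {v, u} \<in> G (Suc j)}"
  by (auto simp: amid_def anotify_def Iset_def Dset_def)

lemma Suc_simps:
  "nn (arun (Suc j) v) = nn (amid j v)" "me (arun (Suc j) v) = me (amid j v)"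
  "rnd (arun (Suc j) v) = rnd (amid j v)" "nb (arun (Suc j) v) = nb (amid j v)"
  "sent (arun (Suc j) v) = min (Suc (sent (amid j v))) (length (gen (amid j v)))"
  "gen (arun (Suc j) v) = gen (amid j v) @ concat (map (\<lambda>u. relay (rnd (amid j v)) u (Mj j v u)) (sorted_list_of_set (nb (amid j v))))"
  "rcv (arun (Suc j) v) u = (if u \<in> nb (amid j v) then rcv (amid j v) u @ rcvadd (rnd (amid j v)) (Mj j v u) else rcv (amid j v) u)"
  "allE (arun (Suc j) v) = (\<forall>u\<in>nb (amid j v). case Mj j v u of Some (e, _, _) \<Rightarrow> e | None \<Rightarrow> False)"
  "cns (arun (Suc j) v) = (\<not> chg (amid j v) \<and> (\<forall>u\<in>nb (amid j v). case Mj j v u of Some (_, f, _) \<Rightarrow> f | None \<Rightarrow> False))"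
  unfolding arun_Suc' arecv_def by simp_all

lemma relay_set: "y \<in> set (relay t u m) \<Longrightarrow> \<exists>e f x b. m = Some (e, f, Some (S1 x b)) \<and> y = (t, S2 u x b)"
  by (auto simp: relay_def split: option.splits item.splits)

lemma hditem_set: "hditem s = Some it \<Longrightarrow> it \<in> snd ` set (gen s)"
  by (auto simp: hditem_def split: if_splits)

lemma inv0_0: "inv0 0" by (simp add: inv0_def ainit_def G0)

lemma inv0_mid: assumes "inv0 j"
  shows "\<forall>y\<in>set (gen (amid j v)). fst y \<le> Suc j \<and> ids (snd y) \<subseteq> V"
proof
  fix y assume y: "y \<in> set (gen (amid j v))"
  have r: "rnd (arun j v) = j" using assms by (simp add: inv0_def)
  show "fst y \<le> Suc j \<and> ids (snd y) \<subseteq> V"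
  proof (cases "y \<in> set (gen (arun j v))")
    case True then show ?thesis using assms by (force simp: inv0_def)
  next
    case False
    then obtain x where "x \<in> chset j v" "y = (Suc j, S1 x ({v, x} \<in> G (Suc j)))"
      using y by (auto simp: genmid r chset_eq[symmetric])
    then show ?thesis using chset_V[of x j v] by (simp add: ids_def)
  qed
qed

lemma inv0_Suc: assumes "inv0 j" shows "inv0 (Suc j)"
  unfolding inv0_def
proof (intro allI conjI)
  fix v
  have a: "nn (arun j v) = n \<and> me (arun j v) = v \<and> rnd (arun j v) = j \<and> nb (arun j v) = {u. {v, u} \<in> G j} \<and> sent (arun j v) \<le> length (gen (arun j v))"
    using assms by (simp add: inv0_def)
  show "nn (arun (Suc j) v) = n" "me (arun (Suc j) v) = v" "rnd (arun (Suc j) v) = Suc j"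
    using a by (simp_all add: Suc_simps)
  show "nb (arun (Suc j) v) = {u. {v, u} \<in> G (Suc j)}" using a nbmid by (simp add: Suc_simps)
  show "sent (arun (Suc j) v) \<le> length (gen (arun (Suc j) v))" by (simp add: Suc_simps)
  show "\<forall>y\<in>set (gen (arun (Suc j) v)). fst y \<le> Suc j \<and> ids (snd y) \<subseteq> V"
  proof
    fix y assume y: "y \<in> set (gen (arun (Suc j) v))"
    show "fst y \<le> Suc j \<and> ids (snd y) \<subseteq> V"
    proof (cases "y \<in> set (gen (amid j v))")
      case True then show ?thesis using inv0_mid[OF assms] by blast
    next
      case False
      then obtain u where u: "u \<in> nb (amid j v)" "y \<in> set (relay (Suc j) u (Mj j v u))"
        using y a finite_subset[OF _ finV] by (auto simp: Suc_simps nbmid fin_nbr2)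
      then obtain e f x b where m: "Mj j v u = Some (e, f, Some (S1 x b))" "y = (Suc j, S2 u x b)"
        using relay_set by blast
      then have "hditem (amid j u) = Some (S1 x b)" by (auto simp: Mj_def asend_def split: if_splits)
      then have "S1 x b \<in> snd ` set (gen (amid j u))" by (rule hditem_set)
      then have "x \<in> V" using inv0_mid[OF assms, of u] by (force simp: ids_def)
      moreover have "u \<in> V" using u a nbmid by (auto dest: edgeV)
      ultimately show ?thesis using m by (simp add: ids_def)
    qed
  qed
qed

lemma inv0: "inv0 r"
  by (induction r) (auto intro: inv0_0 inv0_Suc)

lemma basic:
  "nn (arun r v) = n" "me (arun r v) = v" "rnd (arun r v) = r"
  "nb (arun r v) = {u. {v, u} \<in> G r}" "sent (arun r v) \<le> length (gen (arun r v))"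
  "y \<in> set (gen (arun r v)) \<Longrightarrow> fst y \<le> r"
  "y \<in> set (gen (arun r v)) \<Longrightarrow> ids (snd y) \<subseteq> V"
  using inv0[of r] by (auto simp: inv0_def)

lemma nb_mid: "nb (amid j v) = {u. {v, u} \<in> G (Suc j)}"
  using nbmid basic by simp

lemma genmid': "gen (amid j v) = gen (arun j v) @ map (\<lambda>x. (Suc j, S1 x ({v, x} \<in> G (Suc j)))) (Il j v @ Dl j v)"
  using genmid basic by simp

lemma mid_simps2[simp]: "nn (amid j v) = n" "me (amid j v) = v" "rnd (amid j v) = Suc j"
  by (simp_all add: basic)

lemma fin_nb_mid: "finite (nb (amid j v))" using nb_mid fin_nbr2 by simp

end



context setting begin

declare basic(1,2,3)[simp]

lemma relay_noS1: "\<forall>y\<in>set (concat (map (\<lambda>u. relay t u (M u)) xs)). \<not> isS1 x (snd y) \<and> \<not> isS1a (snd y)"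
  by (auto dest!: relay_set simp: isS1_def isS1a_def)

lemma gen_Suc: "gen (arun (Suc j) v) = gen (amid j v) @ concat (map (\<lambda>u. relay (Suc j) u (Mj j v u)) (sorted_list_of_set (nb (amid j v))))"
  by (simp add: Suc_simps basic)

lemma lastSt_gen_Suc: "lastSt x (gen (arun (Suc j) u)) = lastSt x (gen (amid j u))"
  unfolding gen_Suc by (rule lastSt_app_noS1) (use relay_noS1 in blast)

lemma set_IlDl: "set (Il j v @ Dl j v) = chset j v" using chset_eq by simp

lemma lastSt_gen_mid: "lastSt x (gen (amid j u)) = (if x \<in> chset j u then Some (Suc j, {u, x} \<in> G (Suc j)) else lastSt x (gen (arun j u)))"
  unfolding genmid' lastSt_append lastSt_map_S1[where P="\<lambda>x. {u, x} \<in> G (Suc j)"] set_IlDl by simp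

definition I1 :: "nat \<Rightarrow> bool" where
  "I1 r = (\<forall>u x. ({u, x} \<in> G r \<longrightarrow> lastSt x (gen (arun r u)) = Some (ins_time G r {u, x}, True))
                \<and> ({u, x} \<notin> G r \<longrightarrow> (\<forall>t. lastSt x (gen (arun r u)) \<noteq> Some (t, True))))"

lemma I1: "I1 r"
proof (induction r)
  case 0 then show ?case by (simp add: I1_def G0 ainit_def)
next
  case (Suc j)
  show ?case unfolding I1_def
  proof (intro allI)
    fix u x
    have A: "{u, x} \<in> G (Suc j) \<Longrightarrow> lastSt x (gen (arun (Suc j) u)) = Some (ins_time G (Suc j) {u, x}, True)"
      using Suc.IH unfolding I1_def lastSt_gen_Suc lastSt_gen_mid
      by (auto simp: chset_def it_new it_same)
    have B: "{u, x} \<notin> G (Suc j) \<Longrightarrow> \<forall>t. lastSt x (gen (arun (Suc j) u)) \<noteq> Some (t, True)"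
      using Suc.IH unfolding I1_def lastSt_gen_Suc lastSt_gen_mid
      by (auto simp: chset_def)
    show "({u, x} \<in> G (Suc j) \<longrightarrow> lastSt x (gen (arun (Suc j) u)) = Some (ins_time G (Suc j) {u, x}, True)) \<and>
          ({u, x} \<notin> G (Suc j) \<longrightarrow> (\<forall>t. lastSt x (gen (arun (Suc j) u)) \<noteq> Some (t, True)))"
      using A B by blast
  qed
qed

lemma I1a: "{u, x} \<in> G r \<Longrightarrow> lastSt x (gen (arun r u)) = Some (ins_time G r {u, x}, True)"
  using I1 unfolding I1_def by blast
lemma I1b: "lastSt x (gen (arun r u)) = Some (t, True) \<Longrightarrow> {u, x} \<in> G r"
  using I1 unfolding I1_def by blast

lemma s2of_relay: "s2of w (relay t u m) = (if u = w then (case m of Some (_, _, Some (S1 x b)) \<Rightarrow> [(t, S1 x b)] | _ \<Rightarrow> []) else [])"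
  by (auto simp: relay_def s2of_def cv_def split: option.splits item.splits)

lemma concat_single_distinct: "distinct xs \<Longrightarrow> concat (map (\<lambda>u. if u = w then F u else []) xs) = (if w \<in> set xs then F w else [])"
  by (induction xs) auto

lemma s2of_concat: "s2of w (concat xs) = concat (map (s2of w) xs)"
  by (induction xs) auto

lemma s2of_relays: "distinct xs \<Longrightarrow> s2of w (concat (map (\<lambda>u. relay t u (M u)) xs)) =
   (if w \<in> set xs then (case M w of Some (_, _, Some (S1 x b)) \<Rightarrow> [(t, S1 x b)] | _ \<Rightarrow> []) else [])"
  unfolding s2of_concat map_map comp_def s2of_relay
  by (rule concat_single_distinct[where F="\<lambda>w. case M w of Some (_, _, Some (S1 x b)) \<Rightarrow> [(t, S1 x b)] | _ \<Rightarrow> []"])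

lemma filter_rcvadd: "filter (\<lambda>y. isS1a (snd y)) (rcvadd t m) = (case m of Some (_, _, Some (S1 x b)) \<Rightarrow> [(t, S1 x b)] | _ \<Rightarrow> [])"
  by (auto simp: rcvadd_def isS1a_def split: option.splits item.splits)

definition I3 :: "nat \<Rightarrow> bool" where
  "I3 r = (\<forall>u w. s2of w (after_last w (gen (arun r u))) = filter (\<lambda>y. isS1a (snd y)) (rcv (arun r u) w))"

lemma I3_mid: assumes "I3 j"
  shows "s2of w (after_last w (gen (amid j u))) = filter (\<lambda>y. isS1a (snd y)) (rcv (amid j u) w)"
proof (cases "w \<in> chset j u")
  case True
  let ?N = "map (\<lambda>x. (Suc j, S1 x ({u, x} \<in> G (Suc j)))) (Il j u @ Dl j u)"
  have "\<exists>y\<in>set ?N. isS1 w (snd y)" using True set_IlDl[of j u] by (force simp: isS1_def)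
  then have "after_last w (gen (amid j u)) = after_last w ?N"
    unfolding genmid' by (rule after_last_app_S1)
  moreover have "s2of w (after_last w ?N) = []"
    by (rule s2of_S1items) (use after_last_set in \<open>force simp: isS1a_def\<close>)
  ultimately show ?thesis using True by simp
next
  case False
  let ?N = "map (\<lambda>x. (Suc j, S1 x ({u, x} \<in> G (Suc j)))) (Il j u @ Dl j u)"
  have "\<forall>y\<in>set ?N. \<not> isS1 w (snd y)" using False set_IlDl[of j u] by (force simp: isS1_def)
  then have "after_last w (gen (amid j u)) = after_last w (gen (arun j u)) @ ?N"
    unfolding genmid' by (rule after_last_app_noS1)
  moreover have "s2of w ?N = []" by (rule s2of_S1items) (auto simp: isS1a_def)
  ultimately show ?thesis using False assms by (simp add: I3_def)
qed

lemma I3: "I3 r"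
proof (induction r)
  case 0 then show ?case by (simp add: I3_def ainit_def after_last_def)
next
  case (Suc j)
  show ?case unfolding I3_def
  proof (intro allI)
    fix u w
    let ?R = "concat (map (\<lambda>u'. relay (Suc j) u' (Mj j u u')) (sorted_list_of_set (nb (amid j u))))"
    have "after_last w (gen (arun (Suc j) u)) = after_last w (gen (amid j u)) @ ?R"
      unfolding gen_Suc by (rule after_last_app_noS1) (use relay_noS1 in blast)
    then have "s2of w (after_last w (gen (arun (Suc j) u))) = s2of w (after_last w (gen (amid j u))) @ s2of w ?R"
      by simp
    also have "s2of w ?R = (if w \<in> nb (amid j u) then (case Mj j u w of Some (_, _, Some (S1 x b)) \<Rightarrow> [(Suc j, S1 x b)] | _ \<Rightarrow> []) else [])"
      using s2of_relays[of "sorted_list_of_set (nb (amid j u))" w "Suc j" "Mj j u"] fin_nb_mid by simp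
    finally show "s2of w (after_last w (gen (arun (Suc j) u))) = filter (\<lambda>y. isS1a (snd y)) (rcv (arun (Suc j) u) w)"
      using I3_mid[OF Suc.IH, of w u] by (simp add: Suc_simps filter_rcvadd)
  qed
qed

lemma I3': "s2of w (after_last w (gen (arun r u))) = filter (\<lambda>y. isS1a (snd y)) (rcv (arun r u) w)"
  using I3 unfolding I3_def by blast

end



context setting begin

lemma Mj_nb: "u \<in> nb (amid j v) \<Longrightarrow> Mj j v u = Some (asend (amid j u))"
  by (simp add: Mj_def nb_mid insert_commute)

lemma Mj_notnb: "u \<notin> nb (amid j v) \<Longrightarrow> Mj j v u = None"
  by (simp add: Mj_def nb_mid insert_commute)

lemma rcvadd_asend: "rcvadd t (Some (asend s)) = (if sent s < length (gen s) then [(t, snd (gen s ! sent s))] else [])"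
  by (simp add: rcvadd_def asend_def hditem_def)

lemma sent_mid_le: "sent (amid j u) \<le> length (gen (amid j u))"
  using basic(5)[of j u] by (simp add: genmid')

lemma take_sent_Suc:
  "take (sent (arun (Suc j) u)) (gen (arun (Suc j) u)) =
   take (sent (arun j u)) (gen (arun j u)) @
     (if sent (arun j u) < length (gen (amid j u)) then [gen (amid j u) ! sent (arun j u)] else [])"
proof -
  let ?s = "sent (arun j u)" and ?gm = "gen (amid j u)"
  have s: "?s \<le> length (gen (arun j u))" by (rule basic)
  have "take (min (Suc ?s) (length ?gm)) (gen (arun (Suc j) u)) = take (min (Suc ?s) (length ?gm)) ?gm"
    by (simp add: gen_Suc)
  also have "\<dots> = take ?s ?gm @ (if ?s < length ?gm then [?gm ! ?s] else [])"
    using sent_mid_le[of j u] by (auto simp: take_Suc_conv_app_nth min_def)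
  also have "take ?s ?gm = take ?s (gen (arun j u))" using s by (simp add: genmid')
  finally show ?thesis by (simp add: Suc_simps)
qed

definition I2 :: "nat \<Rightarrow> bool" where
  "I2 r = (\<forall>v u. ({v, u} \<notin> G r \<longrightarrow> rcv (arun r v) u = []) \<and>
     ({v, u} \<in> G r \<longrightarrow> (\<exists>k \<le> sent (arun r u).
        list_all2 (\<lambda>a b. snd a = snd b \<and> fst b \<le> fst a) (rcv (arun r v) u) (drop k (take (sent (arun r u)) (gen (arun r u))))
        \<and> (\<forall>y\<in>set (take k (gen (arun r u))). fst y < ins_time G r {v, u}))))"

lemma I2_step: assumes IH: "I2 j" and e: "{v, u} \<in> G (Suc j)"
  shows "\<exists>k \<le> sent (arun (Suc j) u).
        list_all2 (\<lambda>a b. snd a = snd b \<and> fst b \<le> fst a) (rcv (arun (Suc j) v) u) (drop k (take (sent (arun (Suc j) u)) (gen (arun (Suc j) u))))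
        \<and> (\<forall>y\<in>set (take k (gen (arun (Suc j) u))). fst y < ins_time G (Suc j) {v, u})"
proof -
  let ?s = "sent (arun j u)" and ?gm = "gen (amid j u)"
  let ?new = "(if ?s < length ?gm then [(Suc j, snd (?gm ! ?s))] else [])"
  let ?newg = "(if ?s < length ?gm then [?gm ! ?s] else [])"
  have unb: "u \<in> nb (amid j v)" using e by (simp add: nb_mid)
  have rcvS: "rcv (arun (Suc j) v) u = rcv (amid j v) u @ ?new"
    using unb by (simp add: Suc_simps Mj_nb rcvadd_asend)
  have newrel: "list_all2 (\<lambda>a b. snd a = snd b \<and> fst b \<le> fst a) ?new ?newg"
  proof (cases "?s < length ?gm")
    case True
    then have "?gm ! ?s \<in> set ?gm" by simp
    then have "fst (?gm ! ?s) \<le> Suc j" using inv0_mid[OF inv0[of j], of u] by blast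
    then show ?thesis using True by simp
  qed simp
  have sS: "?s \<le> sent (arun (Suc j) u)" using basic(5)[of j u] by (simp add: Suc_simps genmid')
  have s: "?s \<le> length (gen (arun j u))" by (rule basic)
  have takek: "k \<le> ?s \<Longrightarrow> take k (gen (arun (Suc j) u)) = take k (gen (arun j u))" for k
    using s by (simp add: gen_Suc genmid')
  show ?thesis
  proof (cases "u \<in> chset j v")
    case True
    then have "{v, u} \<notin> G j" using e by (simp add: chset_def)
    then have it: "ins_time G (Suc j) {v, u} = Suc j" using e it_new by blast
    have r0: "rcv (amid j v) u = []" using True by simp
    show ?thesis
    proof (intro exI[of _ ?s] conjI)
      show "?s \<le> sent (arun (Suc j) u)" by (rule sS)
      show "list_all2 (\<lambda>a b. snd a = snd b \<and> fst b \<le> fst a) (rcv (arun (Suc j) v) u) (drop ?s (take (sent (arun (Suc j) u)) (gen (arun (Suc j) u))))"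
        using newrel s unfolding rcvS r0 by (simp add: take_sent_Suc)
      show "\<forall>y\<in>set (take ?s (gen (arun (Suc j) u))). fst y < ins_time G (Suc j) {v, u}"
        using takek[of ?s] basic(6)[of _ j u] by (force simp: it dest: in_set_takeD)
    qed
  next
    case False
    then have ej: "{v, u} \<in> G j" using e by (simp add: chset_def)
    then obtain k where k: "k \<le> ?s" "list_all2 (\<lambda>a b. snd a = snd b \<and> fst b \<le> fst a) (rcv (arun j v) u) (drop k (take ?s (gen (arun j u))))"
      "\<forall>y\<in>set (take k (gen (arun j u))). fst y < ins_time G j {v, u}"
      using IH unfolding I2_def by blast
    have it: "ins_time G (Suc j) {v, u} = ins_time G j {v, u}" using ej it_same by blast
    have r0: "rcv (amid j v) u = rcv (arun j v) u" using False by simp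
    show ?thesis
    proof (intro exI[of _ k] conjI)
      show "k \<le> sent (arun (Suc j) u)" using k sS by simp
      have "drop k (take (sent (arun (Suc j) u)) (gen (arun (Suc j) u))) = drop k (take ?s (gen (arun j u))) @ ?newg"
        using k(1) s by (simp add: take_sent_Suc)
      then show "list_all2 (\<lambda>a b. snd a = snd b \<and> fst b \<le> fst a) (rcv (arun (Suc j) v) u) (drop k (take (sent (arun (Suc j) u)) (gen (arun (Suc j) u))))"
        using k(2) newrel unfolding rcvS r0 by (simp add: list_all2_appendI)
      show "\<forall>y\<in>set (take k (gen (arun (Suc j) u))). fst y < ins_time G (Suc j) {v, u}"
        using k(1,3) takek[of k] it by simp
    qed
  qed
qed

lemma I2: "I2 r"
proof (induction r)
  case 0 then show ?case by (simp add: I2_def G0 ainit_def)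
next
  case (Suc j)
  show ?case unfolding I2_def
  proof (intro allI conjI impI)
    fix v u
    assume ne: "{v, u} \<notin> G (Suc j)"
    then have unb: "u \<notin> nb (amid j v)" by (simp add: nb_mid)
    show "rcv (arun (Suc j) v) u = []"
    proof (cases "u \<in> chset j v")
      case True then show ?thesis using unb by (simp add: Suc_simps)
    next
      case False
      then have "{v, u} \<notin> G j" using ne by (simp add: chset_def)
      then show ?thesis using unb False Suc.IH by (simp add: Suc_simps I2_def)
    qed
  next
    fix v u assume "{v, u} \<in> G (Suc j)"
    then show "\<exists>k \<le> sent (arun (Suc j) u).
        list_all2 (\<lambda>a b. snd a = snd b \<and> fst b \<le> fst a) (rcv (arun (Suc j) v) u) (drop k (take (sent (arun (Suc j) u)) (gen (arun (Suc j) u))))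
        \<and> (\<forall>y\<in>set (take k (gen (arun (Suc j) u))). fst y < ins_time G (Suc j) {v, u})"
      using I2_step[OF Suc.IH] by blast
  qed
qed

lemma I2a: "{v, u} \<notin> G r \<Longrightarrow> rcv (arun r v) u = []"
  using I2 unfolding I2_def by blast

lemma I2b: "{v, u} \<in> G r \<Longrightarrow> \<exists>k \<le> sent (arun r u).
        list_all2 (\<lambda>a b. snd a = snd b \<and> fst b \<le> fst a) (rcv (arun r v) u) (drop k (take (sent (arun r u)) (gen (arun r u))))
        \<and> (\<forall>y\<in>set (take k (gen (arun r u))). fst y < ins_time G r {v, u})"
  using I2 unfolding I2_def by blast

end



lemma lastSt_filter_S1a: "lastSt x (filter (\<lambda>y. isS1a (snd y)) xs) = lastSt x xs"
  by (induction xs) (auto simp: lastSt_Cons isS1_def isS1a_def split: option.splits item.splits)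

lemma after_last_drop_suffix: "\<exists>zs. after_last w xs = zs @ after_last w (drop k xs)"
proof (cases "\<exists>y\<in>set (drop k xs). isS1 w (snd y)")
  case True
  then show ?thesis using after_last_app_S1[of "drop k xs" w "take k xs"] by simp
next
  case False
  then show ?thesis using after_last_app_noS1[of "drop k xs" w "take k xs"] after_last_noS1[of "drop k xs" w] by auto
qed

lemma la2_map_snd: "list_all2 (\<lambda>a b. snd a = snd b \<and> P a b) xs ys \<Longrightarrow> map snd xs = map snd ys"
  by (induction rule: list_all2_induct) auto

context setting begin

lemma F1: "eflag (amid j w) \<Longrightarrow> sent (arun (Suc j) w) = length (gen (amid j w))"
  by (simp add: Suc_simps eflag_def)

lemma F2: "allE (arun (Suc j) u) = (\<forall>w\<in>nb (amid j u). eflag (amid j w))"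
  by (simp add: Suc_simps Mj_nb asend_def)

lemma F3: "cns (arun (Suc j) v) = (chset j v = {} \<and> (\<forall>u\<in>nb (amid j v). fflag (amid j u)))"
  by (simp add: Suc_simps Mj_nb asend_def)

lemma fflag_mid: "fflag (amid j u) = (chset j u = {} \<and> eflag (amid j u) \<and> allE (arun j u))"
  by (simp add: fflag_def)

lemma genmid_nochg: "chset j u = {} \<Longrightarrow> gen (amid j u) = gen (arun j u)"
proof -
  assume "chset j u = {}"
  then have "Il j u @ Dl j u = []" using set_IlDl[of j u] by (metis set_empty)
  then show ?thesis by (simp add: genmid')
qed

lemma nochg_edge: "chset j v = {} \<Longrightarrow> ({v, x} \<in> G (Suc j)) = ({v, x} \<in> G j)"
  by (auto simp: chset_def)

lemma nochg_edge': "chset j v = {} \<Longrightarrow> ({x, v} \<in> G (Suc j)) = ({x, v} \<in> G j)"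
  by (auto simp: chset_def insert_commute)

lemma setup1:
  assumes c: "cns (arun (Suc p) v)" and u: "u \<in> nb (arun (Suc p) v)"
  shows "{v, u} \<in> G p" "allE (arun p u)"
    "\<exists>k. map snd (rcv (arun (Suc p) v) u) = map snd (drop k (gen (arun p u)))
         \<and> (\<forall>y\<in>set (take k (gen (arun p u))). fst y < ins_time G p {v, u})"
proof -
  have cv: "chset p v = {}" and ff: "fflag (amid p u)" using c u F3[of p v] by (auto simp: Suc_simps)
  then have cu: "chset p u = {}" and ef: "eflag (amid p u)" and aE: "allE (arun p u)"
    by (auto simp: fflag_mid)
  have e1: "{v, u} \<in> G (Suc p)" using u by (simp add: basic)
  then show ep: "{v, u} \<in> G p" using nochg_edge[OF cv] by simp
  show "allE (arun p u)" by (rule aE)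
  have gm: "gen (amid p u) = gen (arun p u)" by (rule genmid_nochg[OF cu])
  have snt: "sent (arun (Suc p) u) = length (gen (arun p u))" using F1[OF ef] gm by simp
  have tk: "take (sent (arun (Suc p) u)) (gen (arun (Suc p) u)) = gen (arun p u)"
    using snt gm by (simp add: gen_Suc)
  obtain k where k: "k \<le> sent (arun (Suc p) u)"
    "list_all2 (\<lambda>a b. snd a = snd b \<and> fst b \<le> fst a) (rcv (arun (Suc p) v) u) (drop k (take (sent (arun (Suc p) u)) (gen (arun (Suc p) u))))"
    "\<forall>y\<in>set (take k (gen (arun (Suc p) u))). fst y < ins_time G (Suc p) {v, u}"
    using I2b[OF e1] by blast
  have tk2: "take k (gen (arun (Suc p) u)) = take k (gen (arun p u))"
    using k(1) snt gm by (simp add: gen_Suc)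
  show "\<exists>k. map snd (rcv (arun (Suc p) v) u) = map snd (drop k (gen (arun p u)))
         \<and> (\<forall>y\<in>set (take k (gen (arun p u))). fst y < ins_time G p {v, u})"
    using k tk tk2 it_same[OF ep] la2_map_snd[OF k(2)] by auto
qed

lemma setup2:
  assumes aE: "allE (arun p u)" and e: "{u, w} \<in> G p"
  shows "\<exists>q k. p = Suc q
     \<and> list_all2 (\<lambda>a b. snd a = snd b \<and> fst b \<le> fst a) (rcv (arun p u) w) (drop k (gen (amid q w)))
     \<and> (\<forall>y\<in>set (take k (gen (amid q w))). fst y < ins_time G p {u, w})
     \<and> (\<forall>x. lastSt x (gen (amid q w)) = lastSt x (gen (arun p w)))"
proof -
  obtain q where p: "p = Suc q" using e G0 by (cases p) auto
  have "w \<in> nb (amid q u)" using e p by (simp add: nb_mid)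
  then have ef: "eflag (amid q w)" using aE p F2 by auto
  have snt: "sent (arun (Suc q) w) = length (gen (amid q w))" by (rule F1[OF ef])
  have tk: "take (sent (arun (Suc q) w)) (gen (arun (Suc q) w)) = gen (amid q w)"
    using snt by (simp add: gen_Suc)
  obtain k where k: "k \<le> sent (arun (Suc q) w)"
    "list_all2 (\<lambda>a b. snd a = snd b \<and> fst b \<le> fst a) (rcv (arun (Suc q) u) w) (drop k (take (sent (arun (Suc q) w)) (gen (arun (Suc q) w))))"
    "\<forall>y\<in>set (take k (gen (arun (Suc q) w))). fst y < ins_time G (Suc q) {u, w}"
    using I2b[of u w "Suc q"] e p by blast
  have tk2: "take k (gen (arun (Suc q) w)) = take k (gen (amid q w))"
    using k(1) snt by (simp add: gen_Suc)
  show ?thesis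
    using k tk tk2 p lastSt_gen_Suc[of _ q w] by (intro exI[of _ q] exI[of _ k]) auto
qed

lemma sound:
  assumes c: "cns (arun (Suc p) v)" and a: "aanswer (arun (Suc p) v) e"
  shows "e \<in> E3 G v p"
proof -
  obtain u where u: "u \<in> nb (arun (Suc p) v)" and
    cases: "e = {v, u}
      \<or> (\<exists>w. map_option snd (lastSt w (rcv (arun (Suc p) v) u)) = Some True \<and> e = {u, w})
      \<or> (\<exists>w x. map_option snd (lastSt x (s2of w (after_last w (rcv (arun (Suc p) v) u)))) = Some True
               \<and> (e = {u, w} \<or> e = {w, x}))"
    using a unfolding aanswer_def basic(2) by blast
  have ep: "{v, u} \<in> G p" and aE: "allE (arun p u)" using setup1[OF c u] by auto
  obtain k where k: "map snd (rcv (arun (Suc p) v) u) = map snd (drop k (gen (arun p u)))"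
    using setup1(3)[OF c u] by blast
  have du: "dist_le2 (G p) v u" using ep by (simp add: dist_le2_def)
  show ?thesis
  proof (cases "e = {v, u}")
    case True then show ?thesis using ep by (auto simp: E3_def dist_le2_def)
  next
    case False
    note F = False
    show ?thesis
    proof (cases "\<exists>w. map_option snd (lastSt w (rcv (arun (Suc p) v) u)) = Some True \<and> e = {u, w}")
      case True
      then obtain w where w: "map_option snd (lastSt w (rcv (arun (Suc p) v) u)) = Some True" "e = {u, w}" by blast
      then have "map_option snd (lastSt w (drop k (gen (arun p u)))) = Some True"
        using map_snd_lastSt[OF k] by simp
      then obtain t where "lastSt w (drop k (gen (arun p u))) = Some (t, True)" by auto
      then have "lastSt w (gen (arun p u)) = Some (t, True)"
        using lastSt_suffix[of w "drop k (gen (arun p u))" _ "take k (gen (arun p u))"] by simp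
      then have "{u, w} \<in> G p" by (rule I1b)
      then show ?thesis using w du by (auto simp: E3_def)
    next
      case False
      then obtain w x where wx: "map_option snd (lastSt x (s2of w (after_last w (rcv (arun (Suc p) v) u)))) = Some True"
        "e = {u, w} \<or> e = {w, x}" using cases F by blast
      have "map snd (s2of w (after_last w (rcv (arun (Suc p) v) u))) = map snd (s2of w (after_last w (drop k (gen (arun p u)))))"
        using map_snd_s2of[OF map_snd_after_last[OF k]] by blast
      from map_snd_lastSt[OF this] wx(1) obtain t where
        "lastSt x (s2of w (after_last w (drop k (gen (arun p u))))) = Some (t, True)" by auto
      moreover obtain zs where "after_last w (gen (arun p u)) = zs @ after_last w (drop k (gen (arun p u)))"
        using after_last_drop_suffix by blast
      ultimately have "lastSt x (s2of w (after_last w (gen (arun p u)))) = Some (t, True)"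
        by (simp add: lastSt_suffix)
      then have r: "lastSt x (rcv (arun p u) w) = Some (t, True)"
        by (simp add: I3' lastSt_filter_S1a)
      then have euw: "{u, w} \<in> G p" using I2a[of u w p] by (cases "{u, w} \<in> G p") auto
      obtain q k' where q: "p = Suc q"
        "list_all2 (\<lambda>a b. snd a = snd b \<and> fst b \<le> fst a) (rcv (arun p u) w) (drop k' (gen (amid q w)))"
        "\<forall>x. lastSt x (gen (amid q w)) = lastSt x (gen (arun p w))"
        using setup2[OF aE euw] by blast
      have "map_option snd (lastSt x (drop k' (gen (amid q w)))) = Some True"
        using map_snd_lastSt[OF la2_map_snd[OF q(2)], of x] r by simp
      then obtain t' where "lastSt x (drop k' (gen (amid q w))) = Some (t', True)" by auto
      then have "lastSt x (gen (amid q w)) = Some (t', True)"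
        using lastSt_suffix[of x "drop k' (gen (amid q w))" _ "take k' (gen (amid q w))"] by simp
      then have "{w, x} \<in> G p" using q(3) I1b by metis
      then show ?thesis using wx(2) euw ep du by (auto simp: E3_def dist_le2_def)
    qed
  qed
qed

lemma complete:
  assumes c: "cns (arun (Suc p) v)" and e: "e \<in> R3 G v p"
  shows "aanswer (arun (Suc p) v) e"
proof -
  have cv: "chset p v = {}" using c F3[of p v] by auto
  have nbv: "nb (arun (Suc p) v) = {u. {v, u} \<in> G p}" using nochg_edge[OF cv] by (simp add: basic)
  have inc: "aanswer (arun (Suc p) v) {v, u}" if "{v, u} \<in> G p" for u
    using that nbv by (auto simp: aanswer_def basic)
  have two: "aanswer (arun (Suc p) v) {u, w}" if H: "{v, u} \<in> G p" "{u, w} \<in> G p"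
     "ins_time G p {u, w} \<ge> ins_time G p {v, u}" for u w
  proof -
    have u: "u \<in> nb (arun (Suc p) v)" using H nbv by simp
    obtain k where k: "map snd (rcv (arun (Suc p) v) u) = map snd (drop k (gen (arun p u)))"
       "\<forall>y\<in>set (take k (gen (arun p u))). fst y < ins_time G p {v, u}"
      using setup1(3)[OF c u] by blast
    have "lastSt w (gen (arun p u)) = Some (ins_time G p {u, w}, True)" using I1a H(2) by blast
    then have "lastSt w (drop k (gen (arun p u))) = Some (ins_time G p {u, w}, True)"
      using lastSt_drop_low[OF k(2)] H(3) by blast
    then have "map_option snd (lastSt w (rcv (arun (Suc p) v) u)) = Some True"
      using map_snd_lastSt[OF k(1)] by simp
    then show ?thesis using u unfolding aanswer_def by blast
  qed
  have three: "aanswer (arun (Suc p) v) {u, w} \<and> aanswer (arun (Suc p) v) {w, x}"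
    if H: "{v, u} \<in> G p" "{u, w} \<in> G p" "{w, x} \<in> G p"
     "ins_time G p {w, x} \<ge> ins_time G p {u, w}" "ins_time G p {w, x} \<ge> ins_time G p {v, u}" for u w x
  proof -
    have u: "u \<in> nb (arun (Suc p) v)" using H nbv by simp
    obtain k where k: "map snd (rcv (arun (Suc p) v) u) = map snd (drop k (gen (arun p u)))"
       "\<forall>y\<in>set (take k (gen (arun p u))). fst y < ins_time G p {v, u}"
      using setup1(3)[OF c u] by blast
    have aE: "allE (arun p u)" using setup1(2)[OF c u] .
    obtain q k' where q: "p = Suc q"
        "list_all2 (\<lambda>a b. snd a = snd b \<and> fst b \<le> fst a) (rcv (arun p u) w) (drop k' (gen (amid q w)))"
        "\<forall>y\<in>set (take k' (gen (amid q w))). fst y < ins_time G p {u, w}"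
        "\<forall>x. lastSt x (gen (amid q w)) = lastSt x (gen (arun p w))"
        using setup2[OF aE H(2)] by blast
    have "lastSt x (gen (amid q w)) = Some (ins_time G p {w, x}, True)" using I1a H(3) q(4) by metis
    then have "lastSt x (drop k' (gen (amid q w))) = Some (ins_time G p {w, x}, True)"
      using lastSt_drop_low[OF q(3)] H(4) by blast
    then obtain t' where t': "t' \<ge> ins_time G p {w, x}" "lastSt x (rcv (arun p u) w) = Some (t', True)"
      using lastSt_rel[OF q(2)] by blast
    then have "lastSt x (s2of w (after_last w (gen (arun p u)))) = Some (t', True)"
      by (simp add: I3' lastSt_filter_S1a)
    then have "lastSt x (s2of w (after_last w (drop k (gen (arun p u))))) = Some (t', True)"
      using lastSt_s2of_drop_low[OF k(2)] t'(1) H(5) by simp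
    moreover have "map snd (s2of w (after_last w (rcv (arun (Suc p) v) u))) = map snd (s2of w (after_last w (drop k (gen (arun p u)))))"
      using map_snd_s2of[OF map_snd_after_last[OF k(1)]] by blast
    ultimately have "map_option snd (lastSt x (s2of w (after_last w (rcv (arun (Suc p) v) u)))) = Some True"
      using map_snd_lastSt by (metis option.simps(9) snd_conv)
    then show ?thesis using u unfolding aanswer_def by blast
  qed
  show ?thesis
  proof -
    consider (a) "e \<in> G p" "v \<in> e"
      | (b) u w where "e = {v, u} \<or> e = {u, w}" "{v, u} \<in> G p" "{u, w} \<in> G p" "ins_time G p {u, w} \<ge> ins_time G p {v, u}"
      | (c) u w x where "e = {v, u} \<or> e = {u, w} \<or> e = {w, x}" "{v, u} \<in> G p" "{u, w} \<in> G p" "{w, x} \<in> G p"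
          "ins_time G p {w, x} \<ge> ins_time G p {u, w}" "ins_time G p {w, x} \<ge> ins_time G p {v, u}"
      using e unfolding R3_def by blast
    then show ?thesis
    proof cases
      case a
      then obtain a b where "e = {a, b}" by (auto elim: edge_form)
      then have "\<exists>u. e = {v, u}" using a(2) by auto
      then show ?thesis using a inc by blast
    next
      case b then show ?thesis using inc two by blast
    next
      case c then show ?thesis using inc three by blast
    qed
  qed
qed

end



context setting begin

definition SD :: "nat \<Rightarrow> nat set set" where "SD j = (G (Suc j) - G j) \<union> (G j - G (Suc j))"

lemma changes_Suc: "changes G (Suc r) = changes G r + card (SD r)"
  by (simp add: changes_def SD_def)

lemma finSD: "finite (SD j)" using finG by (simp add: SD_def)

lemma chset_bij: "bij_betw (\<lambda>x. {u, x}) (chset j u) {e \<in> SD j. u \<in> e}"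
proof (rule bij_betw_imageI)
  show "inj_on (\<lambda>x. {u, x}) (chset j u)" by (auto simp: inj_on_def doubleton_eq_iff)
  show "(\<lambda>x. {u, x}) ` chset j u = {e \<in> SD j. u \<in> e}"
  proof
    show "(\<lambda>x. {u, x}) ` chset j u \<subseteq> {e \<in> SD j. u \<in> e}" by (auto simp: chset_def SD_def)
    show "{e \<in> SD j. u \<in> e} \<subseteq> (\<lambda>x. {u, x}) ` chset j u"
    proof
      fix e assume e: "e \<in> {e \<in> SD j. u \<in> e}"
      then have "e \<in> G (Suc j) \<or> e \<in> G j" by (auto simp: SD_def)
      then obtain a b where ab: "e = {a, b}" "a \<noteq> b" by (auto elim: edge_form)
      then obtain x where "e = {u, x}" using e by auto
      then show "e \<in> (\<lambda>x. {u, x}) ` chset j u" using e by (auto simp: chset_def SD_def)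
    qed
  qed
qed

lemma card_chset: "card (chset j u) = card {e \<in> SD j. u \<in> e}"
  using chset_bij bij_betw_same_card by blast

lemma card_chset_le: "card (chset j u) \<le> card (SD j)"
  unfolding card_chset by (rule card_mono[OF finSD]) auto

lemma sum_chset: "(\<Sum>u\<in>V. card (chset j u)) \<le> 2 * card (SD j)"
proof -
  have "(\<Sum>u\<in>V. card {e \<in> SD j. u \<in> e}) = 2 * card (SD j)"
  proof (rule sum_multicount[OF finV finSD], rule ballI)
    fix e assume "e \<in> SD j"
    then have "e \<in> G (Suc j) \<or> e \<in> G j" by (auto simp: SD_def)
    then obtain a b where ab: "e = {a, b}" "a \<noteq> b" "a \<in> V" "b \<in> V" by (auto elim: edge_form)
    then have "{i \<in> V. i \<in> e} = {a, b}" by auto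
    then show "card {i \<in> V. i \<in> e} = 2" using ab by simp
  qed
  then show ?thesis by (simp add: card_chset)
qed

definition qm :: "nat \<Rightarrow> nat \<Rightarrow> nat" where "qm j u = length (gen (amid j u)) - sent (amid j u)"
definition q :: "nat \<Rightarrow> nat \<Rightarrow> nat" where "q r u = length (gen (arun r u)) - sent (arun r u)"
definition p1 :: "nat \<Rightarrow> nat \<Rightarrow> nat" where
  "p1 r u = length (filter (\<lambda>y. isS1a (snd y)) (drop (sent (arun r u)) (gen (arun r u))))"
definition PP :: "nat \<Rightarrow> nat" where "PP r = (\<Sum>u\<in>V. p1 r u)"
definition busy :: "nat \<Rightarrow> bool" where "busy j = (\<exists>z\<in>V. 0 < qm j z)"
definition NN :: "nat \<Rightarrow> nat" where "NN r = card {j. j < r \<and> busy j}"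
definition hdS1 :: "ast \<Rightarrow> bool" where "hdS1 s = (\<exists>x b. hditem s = Some (S1 x b))"
definition D1 :: "nat \<Rightarrow> nat" where "D1 j = (\<Sum>w\<in>V. if hdS1 (amid j w) then 1 else 0)"

lemma len_IlDl: "length (Il j u @ Dl j u) = card (chset j u)"
proof -
  have "length (Il j u) = card (Iset j u)" "length (Dl j u) = card (Dset j u)"
    by (simp_all add: Il_def Dl_def)
  moreover have "Iset j u \<inter> Dset j u = {}" by (auto simp: Iset_def Dset_def)
  moreover have "card (chset j u) = card (Iset j u) + card (Dset j u)"
    using card_Un_disjoint[OF finI finD \<open>Iset j u \<inter> Dset j u = {}\<close>] chset_eq[of j u] by simp
  ultimately show ?thesis by simp
qed

lemma len_IlDl2: "length (Il j u) + length (Dl j u) = card (chset j u)"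
  using len_IlDl[of j u] by simp

lemma qm_eq: "qm j u = q j u + card (chset j u)"
  using basic(5)[of j u] by (simp add: qm_def q_def genmid' len_IlDl2)

lemma p1mid: "length (filter (\<lambda>y. isS1a (snd y)) (drop (sent (amid j u)) (gen (amid j u)))) = p1 j u + card (chset j u)"
proof -
  have "length (filter (\<lambda>y. isS1a (snd y)) (map (\<lambda>x. (Suc j, S1 x ({u, x} \<in> G (Suc j)))) (Il j u @ Dl j u))) = length (Il j u @ Dl j u)"
    by (simp add: isS1a_def comp_def)
  then show ?thesis using basic(5)[of j u] by (simp add: p1_def genmid' len_IlDl2)
qed

lemma len_relays: "length (concat (map (\<lambda>w. relay t w (Mj j u w)) (sorted_list_of_set (nb (amid j u)))))
   = (\<Sum>w\<in>nb (amid j u). if hdS1 (amid j w) then 1 else 0)"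
proof -
  have "length (concat (map (\<lambda>w. relay t w (Mj j u w)) (sorted_list_of_set (nb (amid j u)))))
      = sum_list (map (\<lambda>w. length (relay t w (Mj j u w))) (sorted_list_of_set (nb (amid j u))))"
    by (simp add: length_concat comp_def)
  also have "\<dots> = (\<Sum>w\<in>nb (amid j u). length (relay t w (Mj j u w)))"
    using fin_nb_mid by (simp add: sum_list_distinct_conv_sum_set)
  also have "\<dots> = (\<Sum>w\<in>nb (amid j u). if hdS1 (amid j w) then 1 else 0)"
    by (rule sum.cong) (auto simp: Mj_nb relay_def asend_def hdS1_def split: option.splits item.splits)
  finally show ?thesis .
qed

lemma relays_le_D1: "(\<Sum>w\<in>nb (amid j u). if hdS1 (amid j w) then 1 else 0) \<le> D1 j"
  unfolding D1_def
  by (rule sum_mono2[OF finV]) (auto simp: nb_mid dest: edgeV)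

lemma q_step: "q (Suc j) u + (if 0 < qm j u then 1 else 0) \<le> qm j u + D1 j"
proof -
  have "length (gen (arun (Suc j) u)) = length (gen (amid j u)) + (\<Sum>w\<in>nb (amid j u). if hdS1 (amid j w) then 1 else 0)"
    by (simp add: gen_Suc len_relays)
  then show ?thesis using relays_le_D1[of j u] sent_mid_le[of j u]
    by (auto simp: q_def qm_def Suc_simps)
qed

lemma hdS1_qm: "hdS1 (amid j u) \<Longrightarrow> 0 < qm j u"
  by (auto simp: hdS1_def hditem_def qm_def split: if_splits)

lemma p1_step: "p1 (Suc j) u + (if hdS1 (amid j u) then 1 else 0) = p1 j u + card (chset j u)"
proof -
  let ?gm = "gen (amid j u)" and ?s = "sent (amid j u)"
  let ?R = "concat (map (\<lambda>w. relay (Suc j) w (Mj j u w)) (sorted_list_of_set (nb (amid j u))))"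
  have sl: "?s \<le> length ?gm" by (rule sent_mid_le)
  have "drop (sent (arun (Suc j) u)) (gen (arun (Suc j) u)) = drop (min (Suc ?s) (length ?gm)) ?gm @ ?R"
    using sl by (simp add: Suc_simps gen_Suc)
  then have "p1 (Suc j) u = length (filter (\<lambda>y. isS1a (snd y)) (drop (min (Suc ?s) (length ?gm)) ?gm))"
    using relay_noS1[of "Suc j" "\<lambda>w. Mj j u w" "sorted_list_of_set (nb (amid j u))"]
    by (simp add: p1_def filter_empty_conv)
  moreover have "length (filter (\<lambda>y. isS1a (snd y)) (drop ?s ?gm)) =
     length (filter (\<lambda>y. isS1a (snd y)) (drop (min (Suc ?s) (length ?gm)) ?gm)) + (if hdS1 (amid j u) then 1 else 0)"
  proof (cases "?s < length ?gm")
    case True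
    then have "drop ?s ?gm = ?gm ! ?s # drop (Suc ?s) ?gm" by (simp add: Cons_nth_drop_Suc)
    moreover have "hdS1 (amid j u) = isS1a (snd (?gm ! ?s))"
      using True by (auto simp: hdS1_def hditem_def isS1a_def split: item.splits)
    ultimately show ?thesis using True by simp
  next
    case False
    then show ?thesis using sl by (simp add: hdS1_def hditem_def)
  qed
  ultimately show ?thesis using p1mid[of j u] by simp
qed

lemma PP_step: "PP (Suc j) + D1 j \<le> PP j + 2 * card (SD j)"
proof -
  have "PP (Suc j) + D1 j = (\<Sum>u\<in>V. p1 (Suc j) u + (if hdS1 (amid j u) then 1 else 0))"
    by (simp add: PP_def D1_def sum.distrib)
  also have "\<dots> = (\<Sum>u\<in>V. p1 j u + card (chset j u))" by (simp add: p1_step)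
  also have "\<dots> = PP j + (\<Sum>u\<in>V. card (chset j u))" by (simp add: PP_def sum.distrib)
  finally show ?thesis using sum_chset[of j] by simp
qed

lemma NN_Suc: "NN (Suc j) = NN j + (if busy j then 1 else 0)"
proof -
  have "{i. i < Suc j \<and> busy i} = {i. i < j \<and> busy i} \<union> (if busy j then {j} else {})" by (auto simp: less_Suc_eq)
  then show ?thesis by (simp add: NN_def)
qed

definition Phi :: "nat \<Rightarrow> bool" where
  "Phi r = (\<forall>u. q r u + PP r + NN r \<le> 3 * changes G r)"

lemma Phi: "Phi r"
proof (induction r)
  case 0 then show ?case by (simp add: Phi_def q_def PP_def p1_def NN_def changes_def ainit_def)
next
  case (Suc j)
  let ?k = "card (SD j)" and ?C = "changes G j"
  have IH: "\<And>u. q j u + PP j + NN j \<le> 3 * ?C" using Suc.IH by (simp add: Phi_def)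
  have ch: "changes G (Suc j) = ?C + ?k" by (rule changes_Suc)
  show ?case unfolding Phi_def
  proof
    fix u
    have A: "q (Suc j) u + (if 0 < qm j u then 1 else 0) + PP (Suc j) \<le> q j u + card (chset j u) + PP j + 2 * ?k"
      using q_step[of j u] PP_step[of j] qm_eq[of j u] by simp
    have cu: "card (chset j u) \<le> ?k" by (rule card_chset_le)
    show "q (Suc j) u + PP (Suc j) + NN (Suc j) \<le> 3 * changes G (Suc j)"
    proof (cases "busy j")
      case False
      then show ?thesis using A cu IH[of u] by (simp add: NN_Suc ch)
    next
      case True
      then obtain z where z: "z \<in> V" "0 < qm j z" by (auto simp: busy_def)
      show ?thesis
      proof (cases "0 < qm j u")
        case True
        then show ?thesis using A cu IH[of u] \<open>busy j\<close> by (simp add: NN_Suc ch)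
      next
        case False
        then have u0: "q j u = 0" "card (chset j u) = 0" using qm_eq[of j u] by auto
        have "PP j + NN j + 1 \<le> 3 * ?C + ?k"
        proof (cases "0 < q j z")
          case True then show ?thesis using IH[of z] by simp
        next
          case False
          then have "0 < card (chset j z)" using z qm_eq[of j z] by simp
          then have "1 \<le> ?k" using card_chset_le[of j z] by simp
          then show ?thesis using IH[of z] by simp
        qed
        then show ?thesis using A u0 False \<open>busy j\<close> by (simp add: NN_Suc ch)
      qed
    qed
  qed
qed

lemma NN_bound: "NN r \<le> 3 * changes G r"
  using Phi[of r] unfolding Phi_def by (metis le_add2 le_trans add.commute)

end



context setting begin

lemma not_eflag_busy: "\<not> eflag (amid j u) \<Longrightarrow> 0 < qm j u"
  by (simp add: eflag_def qm_def)

lemma chset_SD: "x \<in> chset j v \<Longrightarrow> SD j \<noteq> {}"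
  by (auto simp: chset_def SD_def)

lemma bad_imp:
  assumes "\<not> cns (arun (Suc j) v)"
  shows "SD j \<noteq> {} \<or> busy j \<or> (\<exists>i. j = Suc i \<and> busy i)"
proof -
  have "chset j v \<noteq> {} \<or> (\<exists>u\<in>nb (amid j v). \<not> fflag (amid j u))" using assms F3 by blast
  then show ?thesis
  proof
    assume "chset j v \<noteq> {}" then show ?thesis using chset_SD by blast
  next
    assume "\<exists>u\<in>nb (amid j v). \<not> fflag (amid j u)"
    then obtain u where u: "u \<in> nb (amid j v)" "\<not> fflag (amid j u)" by blast
    have uV: "u \<in> V" using u(1) by (auto simp: nb_mid dest: edgeV)
    consider "chset j u \<noteq> {}" | "\<not> eflag (amid j u)" | "\<not> allE (arun j u)" using u(2) fflag_mid by blast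
    then show ?thesis
    proof cases
      case 1 then show ?thesis using chset_SD by blast
    next
      case 2 then show ?thesis using uV not_eflag_busy by (auto simp: busy_def)
    next
      case 3
      then obtain i where i: "j = Suc i" by (cases j) (auto simp: ainit_def)
      then obtain w where "w \<in> nb (amid i u)" "\<not> eflag (amid i w)" using 3 F2 by auto
      moreover then have "w \<in> V" by (auto simp: nb_mid dest: edgeV)
      ultimately have "busy i" using not_eflag_busy unfolding busy_def by blast
      then show ?thesis using i by blast
    qed
  qed
qed

lemma card_SD_rounds: "card {j. j < i \<and> SD j \<noteq> {}} \<le> changes G i"
proof (induction i)
  case 0 then show ?case by simp
next
  case (Suc i)
  have "{j. j < Suc i \<and> SD j \<noteq> {}} = {j. j < i \<and> SD j \<noteq> {}} \<union> (if SD i \<noteq> {} then {i} else {})"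
    by (auto simp: less_Suc_eq)
  moreover have "SD i \<noteq> {} \<Longrightarrow> 1 \<le> card (SD i)" using finSD[of i] card_0_eq[of "SD i"] by linarith
  moreover have "card ({j. j < i \<and> SD j \<noteq> {}} \<union> (if SD i \<noteq> {} then {i} else {})) = card {j. j < i \<and> SD j \<noteq> {}} + (if SD i \<noteq> {} then 1 else 0)"
    by (cases "SD i = {}") (simp_all add: card_insert_if)
  ultimately show ?case using Suc.IH unfolding changes_Suc by (cases "SD i = {}") simp_all
qed

lemma count_bound: "card {j \<in> {1..i}. \<exists>v\<in>V. \<not> cns (arun j v)} \<le> 7 * changes G i"
proof -
  let ?A = "{j. j < i \<and> SD j \<noteq> {}}" and ?B = "{j. j < i \<and> busy j}"
  have sub: "{j \<in> {1..i}. \<exists>v\<in>V. \<not> cns (arun j v)} \<subseteq> Suc ` ?A \<union> Suc ` ?B \<union> (\<lambda>j. Suc (Suc j)) ` ?B"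
  proof
    fix j assume "j \<in> {j \<in> {1..i}. \<exists>v\<in>V. \<not> cns (arun j v)}"
    then have j1: "1 \<le> j" "j \<le> i" and "\<exists>v\<in>V. \<not> cns (arun j v)" by auto
    then obtain v where v: "\<not> cns (arun j v)" by blast
    obtain j' where jj: "j = Suc j'" using j1 by (cases j) auto
    have j: "j = Suc j'" "j' < i" "\<not> cns (arun (Suc j') v)" using jj j1 v by auto
    have "SD j' \<noteq> {} \<or> busy j' \<or> (\<exists>i'. j' = Suc i' \<and> busy i')" by (rule bad_imp[OF j(3)])
    then show "j \<in> Suc ` ?A \<union> Suc ` ?B \<union> (\<lambda>j. Suc (Suc j)) ` ?B"
    proof (elim disjE exE conjE)
      assume "SD j' \<noteq> {}" then have "j' \<in> ?A" using j by simp
      then show ?thesis using j(1) by blast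
    next
      assume "busy j'" then have "j' \<in> ?B" using j by simp
      then show ?thesis using j(1) by blast
    next
      fix i' assume "j' = Suc i'" "busy i'"
      then have "i' \<in> ?B" using j by simp
      then show ?thesis using j(1) \<open>j' = Suc i'\<close> by blast
    qed
  qed
  have "card {j \<in> {1..i}. \<exists>v\<in>V. \<not> cns (arun j v)} \<le> card (Suc ` ?A \<union> Suc ` ?B \<union> (\<lambda>j. Suc (Suc j)) ` ?B)"
    by (rule card_mono[OF _ sub]) simp
  also have "\<dots> \<le> card (Suc ` ?A \<union> Suc ` ?B) + card ((\<lambda>j. Suc (Suc j)) ` ?B)"
    by (rule card_Un_le)
  also have "\<dots> \<le> card (Suc ` ?A) + card (Suc ` ?B) + card ((\<lambda>j. Suc (Suc j)) ` ?B)"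
    using card_Un_le[of "Suc ` ?A" "Suc ` ?B"] by simp
  also have "\<dots> \<le> card ?A + card ?B + card ?B"
    by (intro add_mono card_image_le) simp_all
  also have "\<dots> \<le> changes G i + 3 * changes G i + 3 * changes G i"
    using card_SD_rounds[of i] NN_bound[of i] by (simp add: NN_def)
  finally show ?thesis by simp
qed

end



fun bin :: "nat \<Rightarrow> nat \<Rightarrow> bool list" where
  "bin 0 x = []"
| "bin (Suc L) x = odd x # bin L (x div 2)"

fun unbin :: "bool list \<Rightarrow> nat" where
  "unbin [] = 0"
| "unbin (b # bs) = (if b then 1 else 0) + 2 * unbin bs"

lemma len_bin[simp]: "length (bin L x) = L"
  by (induction L arbitrary: x) auto

lemma unbin_bin: "x < 2 ^ L \<Longrightarrow> unbin (bin L x) = x"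
proof (induction L arbitrary: x)
  case 0 then show ?case by simp
next
  case (Suc L)
  have "x div 2 < 2 ^ L" using Suc.prems by auto
  then show ?case using Suc.IH[of "x div 2"] by simp
qed

definition encI :: "nat \<Rightarrow> item option \<Rightarrow> bool list" where
  "encI L io = (case io of None \<Rightarrow> [False, False, False] @ bin L 0 @ bin L 0
     | Some (S1 x b) \<Rightarrow> [True, False, b] @ bin L x @ bin L 0
     | Some (S2 w x b) \<Rightarrow> [False, True, b] @ bin L w @ bin L x)"

definition decI :: "nat \<Rightarrow> bool list \<Rightarrow> item option" where
  "decI L cs = (if cs ! 0 then Some (S1 (unbin (take L (drop 3 cs))) (cs ! 2))
     else if cs ! 1 then Some (S2 (unbin (take L (drop 3 cs))) (unbin (drop (3 + L) cs)) (cs ! 2))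
     else None)"

definition enc :: "nat \<Rightarrow> amsg \<Rightarrow> bool list" where
  "enc L m = (case m of (e, f, io) \<Rightarrow> e # f # encI L io)"

definition dec :: "nat \<Rightarrow> bool list \<Rightarrow> amsg" where
  "dec L bs = (bs ! 0, bs ! 1, decI L (drop 2 bs))"

lemma len_enc: "length (enc L m) = 5 + 2 * L"
  by (auto simp: enc_def encI_def split: prod.splits option.splits item.splits)

lemma drop3: "drop (3 + L) (a # b # c # xs @ ys) = drop L (xs @ ys)"
  by (simp add: numeral_3_eq_3)

lemma decI_encI: "(\<forall>it. io = Some it \<longrightarrow> (\<forall>x\<in>ids it. x < 2 ^ L)) \<Longrightarrow> decI L (encI L io) = io"
  by (auto simp: decI_def encI_def ids_def unbin_bin drop3 split: option.splits item.splits)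

lemma dec_enc: "(\<forall>it. snd (snd m) = Some it \<longrightarrow> (\<forall>x\<in>ids it. x < 2 ^ L)) \<Longrightarrow> dec L (enc L m) = m"
  by (cases m) (auto simp: dec_def enc_def decI_encI)

datatype ev = Init nat nat | Notif "nat list" "nat list" | Recv "(nat \<times> bool list option) list"

instance ev :: countable by countable_datatype

definition Lof :: "nat \<Rightarrow> nat \<Rightarrow> nat" where "Lof K n = K * nat \<lceil>log 2 (real n + 1)\<rceil>"

fun rstep :: "nat \<Rightarrow> ast \<Rightarrow> ev \<Rightarrow> ast" where
  "rstep K st (Init n v) = ainit n v"
| "rstep K st (Notif I D) = anotify st I D"
| "rstep K st (Recv ms) = arecv st (\<lambda>u. case map_of ms u of Some (Some bs) \<Rightarrow> Some (dec (Lof K (nn st)) bs) | _ \<Rightarrow> None)"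

definition replay :: "nat \<Rightarrow> ev list \<Rightarrow> ast" where
  "replay K h = foldl (rstep K) (ainit 0 0) h"

definition hist :: "nat \<Rightarrow> ev list" where "hist s = from_nat s"

definition calg :: "nat \<Rightarrow> dalg" where
  "calg K = \<lparr>init = (\<lambda>n v. to_nat [Init n v]),
     notify = (\<lambda>s I D. to_nat (hist s @ [Notif (sorted_list_of_set I) (sorted_list_of_set D)])),
     send = (\<lambda>s u. Some (enc (Lof K (nn (replay K (hist s)))) (asend (replay K (hist s))))),
     receive = (\<lambda>s M. to_nat (hist s @ [Recv (map (\<lambda>u. (u, M u)) (sorted_list_of_set (nb (replay K (hist s)))))])),
     consistent = (\<lambda>s. cns (replay K (hist s))),
     answer = (\<lambda>s e. aanswer (replay K (hist s)) e)\<rparr>"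

lemma hist_to_nat[simp]: "hist (to_nat h) = h" by (simp add: hist_def)

lemma replay_snoc[simp]: "replay K (h @ [e]) = rstep K (replay K h) e"
  by (simp add: replay_def)

lemma map_of_map_pair: "map_of (map (\<lambda>u. (u, f u)) xs) u = (if u \<in> set xs then Some (f u) else None)"
  by (induction xs) auto

lemma lg_bound: "real n + 1 \<le> 2 ^ nat \<lceil>log 2 (real n + 1)\<rceil>"
proof -
  have "log 2 (real n + 1) \<ge> 0" by simp
  have "real n + 1 = 2 powr (log 2 (real n + 1))" by simp
  also have "\<dots> \<le> 2 powr (real (nat \<lceil>log 2 (real n + 1)\<rceil>))"
    by (rule powr_mono) (use \<open>log 2 (real n + 1) \<ge> 0\<close> in linarith)+
  also have "\<dots> = 2 ^ nat \<lceil>log 2 (real n + 1)\<rceil>" by (rule powr_realpow) simp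
  finally show ?thesis .
qed

lemma lg_bound_nat: "n < 2 ^ nat \<lceil>log 2 (real n + 1)\<rceil>"
proof -
  have "real n + 1 \<le> real (2 ^ nat \<lceil>log 2 (real n + 1)\<rceil>)" using lg_bound by simp
  then show ?thesis by linarith
qed

lemma lg_ge1: "1 \<le> n \<Longrightarrow> 1 \<le> nat \<lceil>log 2 (real n + 1)\<rceil>"
proof -
  assume "1 \<le> n"
  then have "log 2 2 \<le> log 2 (real n + 1)" by simp
  then have "1 \<le> log 2 (real n + 1)" by simp
  then show ?thesis by linarith
qed

lemma id_bound: assumes "V \<subseteq> {..<n ^ K}" "x \<in> V" shows "x < 2 ^ Lof K n"
proof -
  have "x < n ^ K" using assms by auto
  also have "n ^ K \<le> (2 ^ nat \<lceil>log 2 (real n + 1)\<rceil>) ^ K"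
    using lg_bound_nat[of n] by (intro power_mono) auto
  also have "\<dots> = 2 ^ Lof K n" by (metis Lof_def mult.commute power_mult)
  finally show ?thesis .
qed

context setting begin

lemma corr:
  assumes idb: "V \<subseteq> {..<n ^ K}"
  shows "replay K (hist (run (calg K) n G j v)) = arun j v"
proof (induction j arbitrary: v)
  case 0 then show ?case by (simp add: calg_def replay_def)
next
  case (Suc j)
  have mid: "replay K (hist (mid_state (calg K) G j (run (calg K) n G j) w)) = amid j w" for w
    using Suc.IH[of w] by (simp add: mid_state_def calg_def amid_def Il_def Dl_def Iset_def Dset_def)
  have sendeq: "send (calg K) (mid_state (calg K) G j (run (calg K) n G j) w) x = Some (enc (Lof K n) (asend (amid j w)))" for w x
  proof -
    have "send (calg K) s x = Some (enc (Lof K (nn (replay K (hist s)))) (asend (replay K (hist s))))" for s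
      by (simp add: calg_def)
    then show ?thesis using mid[of w] by simp
  qed
  have recveq: "receive (calg K) s M' = to_nat (hist s @ [Recv (map (\<lambda>u. (u, M' u)) (sorted_list_of_set (nb (replay K (hist s)))))])" for s M'
    by (simp add: calg_def)
  have M: "(\<lambda>u. case map_of (map (\<lambda>u. (u, if {u, v} \<in> G (Suc j) then send (calg K) (mid_state (calg K) G j (run (calg K) n G j) u) v else None))
          (sorted_list_of_set (nb (amid j v)))) u of Some (Some bs) \<Rightarrow> Some (dec (Lof K (nn (amid j v))) bs) | _ \<Rightarrow> None) = Mj j v"
  proof
    fix u
    show "(case map_of (map (\<lambda>u. (u, if {u, v} \<in> G (Suc j) then send (calg K) (mid_state (calg K) G j (run (calg K) n G j) u) v else None))
          (sorted_list_of_set (nb (amid j v)))) u of Some (Some bs) \<Rightarrow> Some (dec (Lof K (nn (amid j v))) bs) | _ \<Rightarrow> None) = Mj j v u"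
    proof (cases "u \<in> nb (amid j v)")
      case True
      then have e: "{u, v} \<in> G (Suc j)" by (simp add: nb_mid insert_commute)
      have ids: "\<forall>it. snd (snd (asend (amid j u))) = Some it \<longrightarrow> (\<forall>x\<in>ids it. x < 2 ^ Lof K n)"
      proof (intro allI impI ballI)
        fix it x assume "snd (snd (asend (amid j u))) = Some it" "x \<in> ids it"
        then have "hditem (amid j u) = Some it" by (simp add: asend_def)
        then have "it \<in> snd ` set (gen (amid j u))" by (rule hditem_set)
        then have "x \<in> V" using inv0_mid[OF inv0[of j], of u] \<open>x \<in> ids it\<close> by auto
        then show "x < 2 ^ Lof K n" using id_bound[OF idb] by blast
      qed
      show ?thesis using True e fin_nb_mid[of j v] dec_enc[OF ids]
        by (simp add: map_of_map_pair Mj_nb sendeq)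
    next
      case False
      then show ?thesis using fin_nb_mid[of j v] by (simp add: map_of_map_pair Mj_notnb)
    qed
  qed
  let ?S = "mid_state (calg K) G j (run (calg K) n G j) v"
  let ?ms = "map (\<lambda>u. (u, if {u, v} \<in> G (Suc j) then send (calg K) (mid_state (calg K) G j (run (calg K) n G j) u) v else None))
          (sorted_list_of_set (nb (replay K (hist ?S))))"
  have R: "run (calg K) n G (Suc j) v = to_nat (hist ?S @ [Recv ?ms])"
    by (simp add: recveq)
  have "replay K (hist (run (calg K) n G (Suc j) v)) = arecv (replay K (hist ?S))
      (\<lambda>u. case map_of ?ms u of Some (Some bs) \<Rightarrow> Some (dec (Lof K (nn (replay K (hist ?S)))) bs) | _ \<Rightarrow> None)"
    by (simp only: R hist_to_nat replay_snoc rstep.simps)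
  also have "\<dots> = arecv (amid j v)
      (\<lambda>u. case map_of (map (\<lambda>u. (u, if {u, v} \<in> G (Suc j) then send (calg K) (mid_state (calg K) G j (run (calg K) n G j) u) v else None))
          (sorted_list_of_set (nb (amid j v)))) u of Some (Some bs) \<Rightarrow> Some (dec (Lof K (nn (amid j v))) bs) | _ \<Rightarrow> None)"
    by (simp only: mid)
  finally show ?case unfolding M arun_Suc' .

qed

end



lemma send_calg: "send (calg K) s x = Some (enc (Lof K (nn (replay K (hist s)))) (asend (replay K (hist s))))"
  by (simp add: calg_def)
lemma cons_calg: "consistent (calg K) s = cns (replay K (hist s))"
  by (simp add: calg_def)
lemma answer_calg: "answer (calg K) s e = aanswer (replay K (hist s)) e"
  by (simp add: calg_def)

context setting begin

lemma corr_mid: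
  assumes idb: "V \<subseteq> {..<n ^ K}"
  shows "replay K (hist (mid_state (calg K) G j (run (calg K) n G j) w)) = amid j w"
  using corr[OF idb, of j w] by (simp add: mid_state_def calg_def amid_def Il_def Dl_def Iset_def Dset_def)

end

lemma fin_from: assumes "card V = n" "V \<subseteq> {..<n ^ K}" shows "finite V"
proof (rule ccontr)
  assume inf: "\<not> finite V"
  then have "n = 0" using assms(1) by simp
  show False
  proof (cases K)
    case 0
    then have "V \<subseteq> {..<1}" using assms(2) \<open>n = 0\<close> by simp
    then show False using inf finite_subset by blast
  next
    case (Suc K')
    then have "V = {}" using assms(2) \<open>n = 0\<close> by simp
    then show False using inf by simp
  qed
qed

theorem theorem8:
  shows "\<forall>K::nat. \<exists>(A::dalg) (c::nat) (B::nat). \<forall>(n::nat) (V::nat set) (G::dyn_graph).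
           card V = n \<and> V \<subseteq> {..< n ^ K} \<and> valid_dyn_graph V G \<longrightarrow>
           solves_R3_listing A c B n V G"
proof (intro allI)
  fix K :: nat
  show "\<exists>(A::dalg) (c::nat) (B::nat). \<forall>(n::nat) (V::nat set) (G::dyn_graph).
           card V = n \<and> V \<subseteq> {..< n ^ K} \<and> valid_dyn_graph V G \<longrightarrow>
           solves_R3_listing A c B n V G"
  proof (rule exI[of _ "calg K"], rule exI[of _ 7], rule exI[of _ "2 * K + 5"], intro allI impI)
    fix n V G
    assume H: "card V = n \<and> V \<subseteq> {..< n ^ K} \<and> valid_dyn_graph V G"
    have finV: "finite V" using fin_from H by blast
    interpret setting n V G using finV H by unfold_locales auto
    have idb: "V \<subseteq> {..< n ^ K}" using H by blast
    have runeq: "replay K (hist (run (calg K) n G j v)) = arun j v" for j v by (rule corr[OF idb])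
    show "solves_R3_listing (calg K) 7 (2 * K + 5) n V G"
    proof -
      have P1: "\<forall>j u v m. {u, v} \<in> G (Suc j) \<longrightarrow> msg (calg K) n G j u v = Some m \<longrightarrow> length m \<le> msg_bound (2 * K + 5) n"
      proof (intro allI impI)
        fix j u v m
        assume e: "{u, v} \<in> G (Suc j)" and m: "msg (calg K) n G j u v = Some m"
        have "m = enc (Lof K n) (asend (amid j u))"
          using m by (simp add: msg_def send_calg corr_mid[OF idb])
        then have lm: "length m = 5 + 2 * (K * nat \<lceil>log 2 (real n + 1)\<rceil>)" by (simp add: len_enc Lof_def)
        have "u \<in> V" using e by (rule edgeV)
        then have "1 \<le> n" using H finV card_0_eq by fastforce
        then have "1 \<le> nat \<lceil>log 2 (real n + 1)\<rceil>" by (rule lg_ge1)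
        then show "length m \<le> msg_bound (2 * K + 5) n"
          using lm by (simp add: msg_bound_def algebra_simps)
      qed
      have P2: "\<forall>i\<ge>1. \<forall>v\<in>V. consistent (calg K) (run (calg K) n G i v) \<longrightarrow>
        (\<forall>e. (e \<in> R3 G v (i - 1) \<longrightarrow> answer (calg K) (run (calg K) n G i v) e)
           \<and> (e \<notin> E3 G v (i - 1) \<longrightarrow> \<not> answer (calg K) (run (calg K) n G i v) e))"
      proof (intro allI impI ballI)
        fix i v e
        assume i: "1 \<le> i" and v: "v \<in> V" and c: "consistent (calg K) (run (calg K) n G i v)"
        obtain p where p: "i = Suc p" using i by (cases i) auto
        have c': "cns (arun (Suc p) v)" using c unfolding p cons_calg runeq .
        have ans: "answer (calg K) (run (calg K) n G i v) e = aanswer (arun (Suc p) v) e"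
          unfolding p answer_calg runeq by (rule refl)
        show "(e \<in> R3 G v (i - 1) \<longrightarrow> answer (calg K) (run (calg K) n G i v) e)
           \<and> (e \<notin> E3 G v (i - 1) \<longrightarrow> \<not> answer (calg K) (run (calg K) n G i v) e)"
          using complete[OF c'] sound[OF c'] ans p by auto
      qed
      have P3: "\<forall>i. card {j \<in> {1..i}. \<exists>v\<in>V. \<not> consistent (calg K) (run (calg K) n G j v)} \<le> 7 * changes G i"
      proof
        fix i
        have "{j \<in> {1..i}. \<exists>v\<in>V. \<not> consistent (calg K) (run (calg K) n G j v)} = {j \<in> {1..i}. \<exists>v\<in>V. \<not> cns (arun j v)}"
          unfolding cons_calg runeq by (rule refl)
        then show "card {j \<in> {1..i}. \<exists>v\<in>V. \<not> consistent (calg K) (run (calg K) n G j v)} \<le> 7 * changes G i"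
          using count_bound by simp
      qed
      show ?thesis unfolding solves_R3_listing_def using P1 P2 P3 by blast
    qed
  qed
qed



end
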